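(* Assume the Framework and the Purification Postulate. A pure state $\Psi\in\mathfrak S_1(\mathrm A\mathrm C)$ is dynamically faithful for system $\mathrm A$ if and only if its marginal $\omega:=(\mathcal I_{\mathrm A}\otimes e_{\mathrm C})\Psi$ is an internal state of $\mathrm A$. In particular, any purification of an internal state of $\mathrm A$ is dynamically faithful for $\mathrm A$.
   Context: Framework. We work in an operational-probabilistic theory: there is a collection of systems $\mathrm A,\mathrm B,\dots$, closed under a composition $\mathrm A\mathrm B$ (associative, symmetric up to a reversible swap, with a trivial system $\mathrm I$ satisfying $\mathrm A\mathrm I=\mathrm A$); for each pair of systems a set $\mathfrak T(\mathrm A,\mathrm B)$ of transformations; a test from $\mathrm A$ to $\mathrm B$ is a finite collection $\{\mathcal C_i\}_{i\in X}\subseteq\mathfrak T(\mathrm A,\mathrm B)$, and every transformation belongs to some test. Tests are closed under sequential composition, parallel composition ($\otimes$), coarse-graining (summing outcomes over the blocks of a partition of $X$) and conditioning (choosing the next test depending on the outcome of the previous one). States of $\mathrm A$ are the elements of $\mathfrak S(\mathrm A):=\mathfrak T(\mathrm I,\mathrm A)$, effects are the elements of $\mathfrak T(\mathrm A,\mathrm I)$, and transformations $\mathrm I\to\mathrm I$ are probabilities in $[0,1]$ (those of a test sum to $1$; composition is multiplication). An effect $a$ and a state $\rho$ give the probability $(a|\rho)$. States (effects) are identified when they give equal probabilities on all effects (states); transformations $\mathcal C,\mathcal C'$ are identified when $\mathcal C\otimes\mathcal I_{\mathrm S}$ and $\mathcal C'\otimes\mathcal I_{\mathrm S}$ act identically on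 all states of $\mathrm A\mathrm S$ for every system $\mathrm S$. States span a finite-dimensional real vector space $\mathfrak S_{\mathbb R}(\mathrm A)$, transformations act linearly, and $\mathfrak T_{\mathbb R}(\mathrm A,\mathrm B)$ is the real span of $\mathfrak T(\mathrm A,\mathrm B)$. Standing assumptions: (i) causality: each system $\mathrm A$ has a unique deterministic effect $e_{\mathrm A}$ (the effect forming a one-outcome observation test), and $e_{\mathrm A\mathrm B}=e_{\mathrm A}\otimes e_{\mathrm B}$; (ii) local discriminability: if two states of $\mathrm A\mathrm B$ differ, some product effect $a\otimes b$ gives them different probabilities; (iii) all sets of states are closed, the theory is not deterministic (hence all sets of states, effects and transformations are convex), and perfectly distinguishable states exist. A state $\rho$ is normalized if $(e|\rho)=1$; $\mathfrak S_1(\mathrm A)$ is the set of normalized states. A channel is a $\mathcal C\in\mathfrak T(\mathrm A,\mathrm B)$ with $e_{\mathrm B}\circ\mathcal C=e_{\mathrm A}$. A channel $\mathcal U\in\mathfrak T(\mathrm A,\mathrm B)$ is reversible if some channel $\mathcal W\in\mathfrak T(\mathrm B,\mathrm A)$ satisfies $\mathcal W\mathcal U=\mathcal I_{\mathrm A}$, $\mathcal U\mathcal W=\mathcal I_{\mathrm B}$; $\mathbf G_{\mathrm A}$ is the group of reversible channels on $\mathrm A$. The marginal of a state $\sigma$ of $\mathrm A\mathrm B$ on $\mathrm A$ is $(\mathcal I_{\mathrm A}\otimes e_{\mathrm B})\sigma$. Refinement. For $\mathcal C\in\mathfrak T(\mathrm A,\mathrm B)$, write $\mathcal D\prec\mathcal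 C$ if there are a test $\{\mathcal D_j\}_{j\in Y}$ and $Y_0\subseteq Y$ with $\mathcal C=\sum_{j\in Y_0}\mathcal D_j$ and $\mathcal D\in\{\mathcal D_j\}_{j\in Y_0}$; the refinement set is $D_{\mathcal C}=\{\mathcal D:\mathcal D\prec\mathcal C\}$. $\mathcal C$ is atomic if $\mathcal D\prec\mathcal C$ implies $\mathcal D=\lambda\mathcal C$ for some $\lambda\in[0,1]$. A pure state is an atomic state; a state is mixed otherwise. A state $\omega$ of $\mathrm A$ is internal if $\mathrm{Span}(D_\omega)=\mathfrak S_{\mathbb R}(\mathrm A)$. Purification Postulate. For every $\rho\in\mathfrak S_1(\mathrm A)$ there are a system $\mathrm B$ and a pure $\Psi\in\mathfrak S_1(\mathrm A\mathrm B)$ with $(\mathcal I_{\mathrm A}\otimes e_{\mathrm B})\Psi=\rho$ (a purification of $\rho$, with purifying system $\mathrm B$); and if $\Psi,\Psi'\in\mathfrak S_1(\mathrm A\mathrm B)$ are purifications of the same state, then $\Psi'=(\mathcal I_{\mathrm A}\otimes\mathcal U)\Psi$ for some $\mathcal U\in\mathbf G_{\mathrm B}$. A state $\sigma\in\mathfrak S(\mathrm A\mathrm C)$ is dynamically faithful for system $\mathrm A$ if for every system $\mathrm B$ and every $\mathcal A,\mathcal A'\in\mathfrak T(\mathrm A,\mathrm B)$, $(\mathcal A\otimes\mathcal I_{\mathrm C})\sigma=(\mathcal A'\otimes\mathcal I_{\mathrm C})\sigma$ implies $\mathcal A=\mathcal A'$. *)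

theory Defs
  imports "HOL-Analysis.Analysis"
begin

section \<open>Operational-probabilistic theories (OPTs)\<close>

text \<open>
  Systems are the elements of a type 's; transformations (already identified up to
  operational equivalence) are the elements of a type 't.
  Tr T A B is the set of transformations from A to B; a test from A to B is a finite,
  nonempty family of transformations, represented as a list (index set = list positions).
  seqc T D C is the sequential composition "D after C", parc T C D is the parallel
  composition C (x) D, idt T A the identity of A, swp T A B the swap AB -> BA, and
  prb T p the probability (a number in [0,1]) that a transformation p : I -> I is.
\<close>

record ('s, 't) opt_data =
  sc   :: "'s \<Rightarrow> 's \<Rightarrow> 's"
  sI   :: "'s"
  Tr   :: "'s \<Rightarrow> 's \<Rightarrow> 't set"
  Tests :: "'s \<Rightarrow> 's \<Rightarrow> 't list set"
  seqc :: "'t \<Rightarrow> 't \<Rightarrow> 't"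
  parc :: "'t \<Rightarrow> 't \<Rightarrow> 't"
  idt  :: "'s \<Rightarrow> 't"
  swp  :: "'s \<Rightarrow> 's \<Rightarrow> 't"
  prb  :: "'t \<Rightarrow> real"

definition St :: "('s,'t) opt_data \<Rightarrow> 's \<Rightarrow> 't set" where
  "St T A = Tr T (sI T) A"

definition Eff :: "('s,'t) opt_data \<Rightarrow> 's \<Rightarrow> 't set" where
  "Eff T A = Tr T A (sI T)"

definition ext_prob :: "('s,'t) opt_data \<Rightarrow> 't \<Rightarrow> 's \<Rightarrow> 't \<Rightarrow> 't \<Rightarrow> real" where
  "ext_prob T C S \<rho> e = prb T (seqc T e (seqc T (parc T C (idt T S)) \<rho>))"

text \<open>C acts as the real linear combination \<Sum> c_i D_i of transformations in T(A,B)
  (equality in T_R(A,B), expressed operationally through all extensions).\<close>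

definition acts_lin :: "('s,'t) opt_data \<Rightarrow> 's \<Rightarrow> 's \<Rightarrow> 't \<Rightarrow> (real \<times> 't) list \<Rightarrow> bool" where
  "acts_lin T A B C cs \<longleftrightarrow> C \<in> Tr T A B \<and> (\<forall>(c,D)\<in>set cs. D \<in> Tr T A B) \<and>
     (\<forall>S. \<forall>\<rho>\<in>Tr T (sI T) (sc T A S). \<forall>e\<in>Tr T (sc T B S) (sI T).
        ext_prob T C S \<rho> e = sum_list (map (\<lambda>(c,D). c * ext_prob T D S \<rho> e) cs))"

definition is_sum :: "('s,'t) opt_data \<Rightarrow> 's \<Rightarrow> 's \<Rightarrow> 't \<Rightarrow> 't list \<Rightarrow> bool" where
  "is_sum T A B C Ds \<longleftrightarrow> acts_lin T A B C (map (\<lambda>D. (1, D)) Ds)"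

text \<open>Deterministic (unique, by causality) effect of A: the effect forming a one-outcome test.\<close>

definition det_eff :: "('s,'t) opt_data \<Rightarrow> 's \<Rightarrow> 't" where
  "det_eff T A = (THE e. [e] \<in> Tests T A (sI T))"

definition channel :: "('s,'t) opt_data \<Rightarrow> 's \<Rightarrow> 's \<Rightarrow> 't \<Rightarrow> bool" where
  "channel T A B C \<longleftrightarrow> C \<in> Tr T A B \<and> seqc T (det_eff T B) C = det_eff T A"

definition reversible :: "('s,'t) opt_data \<Rightarrow> 's \<Rightarrow> 's \<Rightarrow> 't \<Rightarrow> bool" where
  "reversible T A B U \<longleftrightarrow> channel T A B U \<and>
     (\<exists>W. channel T B A W \<and> seqc T W U = idt T A \<and> seqc T U W = idt T B)"

definition revgroup :: "('s,'t) opt_data \<Rightarrow> 's \<Rightarrow> 't set" where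
  "revgroup T A = {U. reversible T A A U}"

definition normalized :: "('s,'t) opt_data \<Rightarrow> 's \<Rightarrow> 't \<Rightarrow> bool" where
  "normalized T A \<rho> \<longleftrightarrow> \<rho> \<in> St T A \<and> prb T (seqc T (det_eff T A) \<rho>) = 1"

definition St1 :: "('s,'t) opt_data \<Rightarrow> 's \<Rightarrow> 't set" where
  "St1 T A = {\<rho>. normalized T A \<rho>}"

definition marginal :: "('s,'t) opt_data \<Rightarrow> 's \<Rightarrow> 's \<Rightarrow> 't \<Rightarrow> 't" where
  "marginal T A B \<Psi> = seqc T (parc T (idt T A) (det_eff T B)) \<Psi>"

definition refines :: "('s,'t) opt_data \<Rightarrow> 's \<Rightarrow> 's \<Rightarrow> 't \<Rightarrow> 't \<Rightarrow> bool" where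
  "refines T A B D C \<longleftrightarrow> (\<exists>Ds\<in>Tests T A B. \<exists>Y0. Y0 \<subseteq> {..<length Ds} \<and>
      is_sum T A B C (map (nth Ds) (sorted_list_of_set Y0)) \<and> D \<in> nth Ds ` Y0)"

definition refset :: "('s,'t) opt_data \<Rightarrow> 's \<Rightarrow> 's \<Rightarrow> 't \<Rightarrow> 't set" where
  "refset T A B C = {D. refines T A B D C}"

definition atomic :: "('s,'t) opt_data \<Rightarrow> 's \<Rightarrow> 's \<Rightarrow> 't \<Rightarrow> bool" where
  "atomic T A B C \<longleftrightarrow> C \<in> Tr T A B \<and>
     (\<forall>D. refines T A B D C \<longrightarrow> (\<exists>l\<in>{0..1}. acts_lin T A B D [(l, C)]))"

definition pure_state :: "('s,'t) opt_data \<Rightarrow> 's \<Rightarrow> 't \<Rightarrow> bool" where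
  "pure_state T A \<rho> \<longleftrightarrow> atomic T (sI T) A \<rho>"

text \<open>The vector space S_R(A): a state is represented by its probability functional on effects
  (states are identified by these probabilities), so S_R(A) is the real span of these functionals.\<close>

definition svec :: "('s,'t) opt_data \<Rightarrow> 's \<Rightarrow> 't \<Rightarrow> ('t \<Rightarrow> real)" where
  "svec T A \<rho> = (\<lambda>e. if e \<in> Eff T A then prb T (seqc T e \<rho>) else 0)"

definition rspan :: "('t \<Rightarrow> real) set \<Rightarrow> ('t \<Rightarrow> real) set" where
  "rspan V = {f. \<exists>F c. finite F \<and> F \<subseteq> V \<and> f = (\<lambda>x. \<Sum>v\<in>F. c v * v x)}"

definition internal :: "('s,'t) opt_data \<Rightarrow> 's \<Rightarrow> 't \<Rightarrow> bool" where
  "internal T A \<omega> \<longleftrightarrow> \<omega> \<in> St T A \<and>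
     rspan (svec T A ` refset T (sI T) A \<omega>) = rspan (svec T A ` St T A)"

definition dyn_faithful :: "('s,'t) opt_data \<Rightarrow> 's \<Rightarrow> 's \<Rightarrow> 't \<Rightarrow> bool" where
  "dyn_faithful T A C \<sigma> \<longleftrightarrow> \<sigma> \<in> St T (sc T A C) \<and>
     (\<forall>B X X'. X \<in> Tr T A B \<longrightarrow> X' \<in> Tr T A B \<longrightarrow>
        seqc T (parc T X (idt T C)) \<sigma> = seqc T (parc T X' (idt T C)) \<sigma> \<longrightarrow> X = X')"

section \<open>The Framework (standing assumptions)\<close>

locale opt =
  fixes T :: "('s, 't) opt_data"
  assumes
    sc_assoc: "\<And>A B C. sc T (sc T A B) C = sc T A (sc T B C)" and
    sc_unit_r: "\<And>A. sc T A (sI T) = A" and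
    sc_unit_l: "\<And>A. sc T (sI T) A = A" and
    seqc_Tr: "\<And>A B C f g. f \<in> Tr T A B \<Longrightarrow> g \<in> Tr T B C \<Longrightarrow> seqc T g f \<in> Tr T A C" and
    parc_Tr: "\<And>A B C D f g. f \<in> Tr T A B \<Longrightarrow> g \<in> Tr T C D \<Longrightarrow>
                 parc T f g \<in> Tr T (sc T A C) (sc T B D)" and
    idt_Tr: "\<And>A. idt T A \<in> Tr T A A" and
    swp_Tr: "\<And>A B. swp T A B \<in> Tr T (sc T A B) (sc T B A)" and
    seqc_assoc: "\<And>A B C D f g h. f \<in> Tr T A B \<Longrightarrow> g \<in> Tr T B C \<Longrightarrow> h \<in> Tr T C D \<Longrightarrow>
                   seqc T h (seqc T g f) = seqc T (seqc T h g) f" and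
    seqc_id_l: "\<And>A B f. f \<in> Tr T A B \<Longrightarrow> seqc T (idt T B) f = f" and
    seqc_id_r: "\<And>A B f. f \<in> Tr T A B \<Longrightarrow> seqc T f (idt T A) = f" and
    parc_assoc: "\<And>A B C D E F f g h. f \<in> Tr T A B \<Longrightarrow> g \<in> Tr T C D \<Longrightarrow> h \<in> Tr T E F \<Longrightarrow>
                   parc T (parc T f g) h = parc T f (parc T g h)" and
    parc_unit_l: "\<And>A B f. f \<in> Tr T A B \<Longrightarrow> parc T (idt T (sI T)) f = f" and
    parc_unit_r: "\<And>A B f. f \<in> Tr T A B \<Longrightarrow> parc T f (idt T (sI T)) = f" and
    parc_id: "\<And>A B. parc T (idt T A) (idt T B) = idt T (sc T A B)" and
    interchange: "\<And>A B C D E F f g h k. f \<in> Tr T A B \<Longrightarrow> g \<in> Tr T B C \<Longrightarrow>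
                   h \<in> Tr T D E \<Longrightarrow> k \<in> Tr T E F \<Longrightarrow>
                   seqc T (parc T g k) (parc T f h) = parc T (seqc T g f) (seqc T k h)" and
    swp_natural: "\<And>A B C D f g. f \<in> Tr T A B \<Longrightarrow> g \<in> Tr T C D \<Longrightarrow>
                   seqc T (swp T B D) (parc T f g) = seqc T (parc T g f) (swp T A C)" and
    swp_inv: "\<And>A B. seqc T (swp T B A) (swp T A B) = idt T (sc T A B)" and
    Tests_Tr: "\<And>A B Cs. Cs \<in> Tests T A B \<Longrightarrow> Cs \<noteq> [] \<and> set Cs \<subseteq> Tr T A B" and
    Tr_in_test: "\<And>A B C. C \<in> Tr T A B \<Longrightarrow> \<exists>Cs\<in>Tests T A B. C \<in> set Cs" and
    idt_test: "\<And>A. [idt T A] \<in> Tests T A A" and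
    swp_test: "\<And>A B. [swp T A B] \<in> Tests T (sc T A B) (sc T B A)" and
    seq_test: "\<And>A B C Cs Ds. Cs \<in> Tests T A B \<Longrightarrow> Ds \<in> Tests T B C \<Longrightarrow>
                 concat (map (\<lambda>c. map (\<lambda>d. seqc T d c) Ds) Cs) \<in> Tests T A C" and
    par_test: "\<And>A B C D Cs Ds. Cs \<in> Tests T A B \<Longrightarrow> Ds \<in> Tests T C D \<Longrightarrow>
                 concat (map (\<lambda>c. map (\<lambda>d. parc T c d) Ds) Cs) \<in> Tests T (sc T A C) (sc T B D)" and
    cond_test: "\<And>A B C Cs Dss. Cs \<in> Tests T A B \<Longrightarrow> length Dss = length Cs \<Longrightarrow>
                 (\<forall>i<length Cs. Dss ! i \<in> Tests T B C) \<Longrightarrow>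
                 concat (map (\<lambda>i. map (\<lambda>d. seqc T d (Cs ! i)) (Dss ! i)) [0..<length Cs])
                   \<in> Tests T A C" and
    coarse_test: "\<And>A B Cs m (f :: nat \<Rightarrow> nat). Cs \<in> Tests T A B \<Longrightarrow>
                 (\<forall>i<length Cs. f i < m) \<Longrightarrow> (\<forall>j<m. \<exists>i<length Cs. f i = j) \<Longrightarrow>
                 \<exists>Ds\<in>Tests T A B. length Ds = m \<and>
                    (\<forall>j<m. is_sum T A B (Ds ! j) (map (nth Cs) (filter (\<lambda>i. f i = j) [0..<length Cs])))" and
    prb_range: "\<And>p. p \<in> Tr T (sI T) (sI T) \<Longrightarrow> 0 \<le> prb T p \<and> prb T p \<le> 1" and
    prb_inj: "inj_on (prb T) (Tr T (sI T) (sI T))" and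
    prb_seqc: "\<And>p q. p \<in> Tr T (sI T) (sI T) \<Longrightarrow> q \<in> Tr T (sI T) (sI T) \<Longrightarrow>
                 prb T (seqc T p q) = prb T p * prb T q" and
    prb_parc: "\<And>p q. p \<in> Tr T (sI T) (sI T) \<Longrightarrow> q \<in> Tr T (sI T) (sI T) \<Longrightarrow>
                 prb T (parc T p q) = prb T p * prb T q" and
    prb_test: "\<And>Ps. Ps \<in> Tests T (sI T) (sI T) \<Longrightarrow> sum_list (map (prb T) Ps) = 1" and
    state_ident: "\<And>A \<rho> \<rho>'. \<rho> \<in> St T A \<Longrightarrow> \<rho>' \<in> St T A \<Longrightarrow>
                 (\<forall>e\<in>Eff T A. prb T (seqc T e \<rho>) = prb T (seqc T e \<rho>')) \<Longrightarrow> \<rho> = \<rho>'" and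
    effect_ident: "\<And>A a a'. a \<in> Eff T A \<Longrightarrow> a' \<in> Eff T A \<Longrightarrow>
                 (\<forall>\<rho>\<in>St T A. prb T (seqc T a \<rho>) = prb T (seqc T a' \<rho>)) \<Longrightarrow> a = a'" and
    trans_ident: "\<And>A B C C'. C \<in> Tr T A B \<Longrightarrow> C' \<in> Tr T A B \<Longrightarrow>
                 (\<forall>S. \<forall>\<rho>\<in>St T (sc T A S).
                    seqc T (parc T C (idt T S)) \<rho> = seqc T (parc T C' (idt T S)) \<rho>) \<Longrightarrow> C = C'" and
    fin_dim: "\<And>A. \<exists>F. finite F \<and> F \<subseteq> St T A \<and> svec T A ` St T A \<subseteq> rspan (svec T A ` F)" and
    causal: "\<And>A. \<exists>!e. [e] \<in> Tests T A (sI T)" and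
    causal_par: "\<And>A B. det_eff T (sc T A B) = parc T (det_eff T A) (det_eff T B)" and
    local_discr: "\<And>A B \<rho> \<sigma>. \<rho> \<in> St T (sc T A B) \<Longrightarrow> \<sigma> \<in> St T (sc T A B) \<Longrightarrow> \<rho> \<noteq> \<sigma> \<Longrightarrow>
                 \<exists>a\<in>Eff T A. \<exists>b\<in>Eff T B.
                    prb T (seqc T (parc T a b) \<rho>) \<noteq> prb T (seqc T (parc T a b) \<sigma>)" and
    states_closed: "\<And>A. closed (svec T A ` St T A)" and
    nondeterministic: "\<exists>p\<in>Tr T (sI T) (sI T). 0 < prb T p \<and> prb T p < 1" and
    convex_Tr: "\<And>A B C C' l. C \<in> Tr T A B \<Longrightarrow> C' \<in> Tr T A B \<Longrightarrow> 0 \<le> l \<Longrightarrow> l \<le> 1 \<Longrightarrow>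
                 \<exists>D. acts_lin T A B D [(l, C), (1 - l, C')]" and
    perf_dist: "\<exists>A \<rho>0 \<rho>1 a0 a1. \<rho>0 \<in> St1 T A \<and> \<rho>1 \<in> St1 T A \<and> [a0, a1] \<in> Tests T A (sI T) \<and>
                 prb T (seqc T a0 \<rho>0) = 1 \<and> prb T (seqc T a1 \<rho>0) = 0 \<and>
                 prb T (seqc T a0 \<rho>1) = 0 \<and> prb T (seqc T a1 \<rho>1) = 1"

section \<open>Purification Postulate\<close>

locale purif_opt = opt T for T :: "('s, 't) opt_data" +
  assumes
    purif_exists: "\<And>A \<rho>. \<rho> \<in> St1 T A \<Longrightarrow>
       \<exists>B \<Psi>. \<Psi> \<in> St1 T (sc T A B) \<and> pure_state T (sc T A B) \<Psi> \<and> marginal T A B \<Psi> = \<rho>" and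
    purif_unique: "\<And>A B \<Psi> \<Psi>'. \<Psi> \<in> St1 T (sc T A B) \<Longrightarrow> \<Psi>' \<in> St1 T (sc T A B) \<Longrightarrow>
       pure_state T (sc T A B) \<Psi> \<Longrightarrow> pure_state T (sc T A B) \<Psi>' \<Longrightarrow>
       marginal T A B \<Psi> = marginal T A B \<Psi>' \<Longrightarrow>
       \<exists>U\<in>revgroup T B. \<Psi>' = seqc T (parc T (idt T A) U) \<Psi>"

end

theory Submission
  imports Defs "HOL-Library.Function_Algebras"
begin

context opt begin

abbreviation "II \<equiv> sI T"
abbreviation "ID A \<equiv> idt T A"
abbreviation cmp (infixr "\<circ>\<^sub>T" 75) where "g \<circ>\<^sub>T f \<equiv> seqc T g f"
abbreviation ten (infixr "\<otimes>\<^sub>T" 80) where "f \<otimes>\<^sub>T g \<equiv> parc T f g"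
abbreviation "E A \<equiv> det_eff T A"

declare sc_assoc[simp] sc_unit_l[simp] sc_unit_r[simp]

lemma Tr_seq[intro]: "f \<in> Tr T A B \<Longrightarrow> g \<in> Tr T B C \<Longrightarrow> g \<circ>\<^sub>T f \<in> Tr T A C"
  by (rule seqc_Tr)

lemma Tr_par: "f \<in> Tr T A B \<Longrightarrow> g \<in> Tr T C D \<Longrightarrow> A' = sc T A C \<Longrightarrow> B' = sc T B D \<Longrightarrow> f \<otimes>\<^sub>T g \<in> Tr T A' B'"
  using parc_Tr by blast

lemma det_test: "[E A] \<in> Tests T A II"
  unfolding det_eff_def using causal[of A] by (rule theI')

lemma det_Tr[simp,intro]: "E A \<in> Tr T A II"
  using Tests_Tr[OF det_test] by auto

lemma det_unique: "[e] \<in> Tests T A II \<Longrightarrow> e = E A"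
  using causal[of A] det_test by blast

lemma idt_Tr'[simp,intro]: "ID A \<in> Tr T A A" by (rule idt_Tr)

lemma prb_idI[simp]: "prb T (ID II) = 1"
  using prb_test[OF idt_test[of II]] by simp

lemma det_I[simp]: "E II = ID II"
  using det_unique[OF idt_test[of II]] by simp

lemma prb_eq_Id: "p \<in> Tr T II II \<Longrightarrow> prb T p = 1 \<Longrightarrow> p = ID II"
  using prb_inj by (auto dest: inj_onD[where x=p and y="ID II"])

lemma seqc_assoc': "f \<in> Tr T A B \<Longrightarrow> g \<in> Tr T B C \<Longrightarrow> h \<in> Tr T C D \<Longrightarrow>
                   (h \<circ>\<^sub>T g) \<circ>\<^sub>T f = h \<circ>\<^sub>T (g \<circ>\<^sub>T f)"
  using seqc_assoc by metis

lemma id_id[simp]: "ID S \<circ>\<^sub>T ID S = ID S" by (rule seqc_id_l[OF idt_Tr])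

lemma ic_left: "f \<in> Tr T A B \<Longrightarrow> g \<in> Tr T B C \<Longrightarrow> (g \<otimes>\<^sub>T ID S) \<circ>\<^sub>T (f \<otimes>\<^sub>T ID S) = (g \<circ>\<^sub>T f) \<otimes>\<^sub>T ID S"
  using interchange[of f A B g C "ID S" S S "ID S" S] by simp

lemma ic_right: "f \<in> Tr T A B \<Longrightarrow> g \<in> Tr T B C \<Longrightarrow> (ID S \<otimes>\<^sub>T g) \<circ>\<^sub>T (ID S \<otimes>\<^sub>T f) = ID S \<otimes>\<^sub>T (g \<circ>\<^sub>T f)"
  using interchange[of "ID S" S S "ID S" S f A B g C] by simp

lemma ic_split1: "f \<in> Tr T A B \<Longrightarrow> g \<in> Tr T C D \<Longrightarrow> (f \<otimes>\<^sub>T ID D) \<circ>\<^sub>T (ID A \<otimes>\<^sub>T g) = f \<otimes>\<^sub>T g"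
  using interchange[of "ID A" A A f B g C D "ID D" D] by (simp add: seqc_id_l seqc_id_r)

lemma ic_split2: "f \<in> Tr T A B \<Longrightarrow> g \<in> Tr T C D \<Longrightarrow> (ID B \<otimes>\<^sub>T g) \<circ>\<^sub>T (f \<otimes>\<^sub>T ID C) = f \<otimes>\<^sub>T g"
  using interchange[of f A B "ID B" B "ID C" C C g D] by (simp add: seqc_id_l seqc_id_r)

lemma par_idI_r[simp]: "f \<in> Tr T A B \<Longrightarrow> f \<otimes>\<^sub>T ID II = f" by (rule parc_unit_r)
lemma par_idI_l[simp]: "f \<in> Tr T A B \<Longrightarrow> ID II \<otimes>\<^sub>T f = f" by (rule parc_unit_l)

lemma state_par: "C \<in> Tr T II X \<Longrightarrow> r \<in> Tr T II S \<Longrightarrow> C \<otimes>\<^sub>T r = (ID X \<otimes>\<^sub>T r) \<circ>\<^sub>T C"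
  using ic_split2[of C II X r II S] by simp

lemma state_par': "C \<in> Tr T II X \<Longrightarrow> r \<in> Tr T II S \<Longrightarrow> C \<otimes>\<^sub>T r = (C \<otimes>\<^sub>T ID S) \<circ>\<^sub>T r"
  using ic_split1[of C II X r II S] by simp

end

context opt begin

definition issum :: "'s \<Rightarrow> 's \<Rightarrow> 't \<Rightarrow> ('i \<Rightarrow> 't) \<Rightarrow> 'i set \<Rightarrow> bool" where
 "issum A B C Ds J \<longleftrightarrow> finite J \<and> C \<in> Tr T A B \<and> (\<forall>j\<in>J. Ds j \<in> Tr T A B) \<and>
   (\<forall>S. \<forall>r\<in>Tr T II (sc T A S). \<forall>e\<in>Tr T (sc T B S) II.
      ext_prob T C S r e = (\<Sum>j\<in>J. ext_prob T (Ds j) S r e))"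

lemma is_sum_issum:
  assumes "finite Y0"
  shows "is_sum T A B C (map (nth Ds) (sorted_list_of_set Y0)) \<longleftrightarrow> issum A B C (nth Ds) Y0"
proof -
  have d: "distinct (sorted_list_of_set Y0)" and st: "set (sorted_list_of_set Y0) = Y0"
    using assms by auto
  have "sum_list (map (\<lambda>(c, D). c * ext_prob T D S r e) (map (\<lambda>D. (1, D)) (map ((!) Ds) (sorted_list_of_set Y0))))
        = (\<Sum>j\<in>Y0. ext_prob T (Ds ! j) S r e)" for S r e
    using sum_list_distinct_conv_sum_set[OF d, of "\<lambda>j. ext_prob T (Ds ! j) S r e"] st
    by (simp add: comp_def)
  then show ?thesis
    unfolding is_sum_def acts_lin_def issum_def using assms st by auto
qed

lemma ep_comp_l:
  assumes C: "C \<in> Tr T A B" and G: "G \<in> Tr T B B'" and r: "r \<in> Tr T II (sc T A S)"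
    and e: "e \<in> Tr T (sc T B' S) II"
  shows "ext_prob T (G \<circ>\<^sub>T C) S r e = ext_prob T C S r (e \<circ>\<^sub>T (G \<otimes>\<^sub>T ID S))"
proof -
  have C1: "C \<otimes>\<^sub>T ID S \<in> Tr T (sc T A S) (sc T B S)" using parc_Tr[OF C idt_Tr] .
  have G1: "G \<otimes>\<^sub>T ID S \<in> Tr T (sc T B S) (sc T B' S)" using parc_Tr[OF G idt_Tr] .
  have "(G \<circ>\<^sub>T C) \<otimes>\<^sub>T ID S \<circ>\<^sub>T r = (G \<otimes>\<^sub>T ID S) \<circ>\<^sub>T ((C \<otimes>\<^sub>T ID S) \<circ>\<^sub>T r)"
    using ic_left[OF C G, of S] seqc_assoc'[OF r C1 G1] by simp
  then show ?thesis unfolding ext_prob_def using seqc_assoc'[OF Tr_seq[OF r C1] G1 e] by simp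
qed

lemma ep_comp_r:
  assumes C: "C \<in> Tr T A B" and G: "G \<in> Tr T B B'" and r: "r \<in> Tr T II (sc T A S)"
    and e: "e \<in> Tr T (sc T B' S) II"
  shows "ext_prob T (G \<circ>\<^sub>T C) S r e = ext_prob T G S ((C \<otimes>\<^sub>T ID S) \<circ>\<^sub>T r) e"
proof -
  have C1: "C \<otimes>\<^sub>T ID S \<in> Tr T (sc T A S) (sc T B S)" using parc_Tr[OF C idt_Tr] .
  have G1: "G \<otimes>\<^sub>T ID S \<in> Tr T (sc T B S) (sc T B' S)" using parc_Tr[OF G idt_Tr] .
  have "(G \<circ>\<^sub>T C) \<otimes>\<^sub>T ID S \<circ>\<^sub>T r = (G \<otimes>\<^sub>T ID S) \<circ>\<^sub>T ((C \<otimes>\<^sub>T ID S) \<circ>\<^sub>T r)"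
    using ic_left[OF C G, of S] seqc_assoc'[OF r C1 G1] by simp
  then show ?thesis unfolding ext_prob_def by simp
qed

lemma issum_comp_l:
  assumes s: "issum A B C Ds J" and G: "G \<in> Tr T B B'"
  shows "issum A B' (G \<circ>\<^sub>T C) (\<lambda>j. G \<circ>\<^sub>T Ds j) J"
proof -
  have C: "C \<in> Tr T A B" and D: "\<And>j. j \<in> J \<Longrightarrow> Ds j \<in> Tr T A B" using s by (auto simp: issum_def)
  show ?thesis unfolding issum_def
  proof (intro conjI ballI allI)
    show "finite J" using s by (simp add: issum_def)
    show "G \<circ>\<^sub>T C \<in> Tr T A B'" using C G by auto
    show "G \<circ>\<^sub>T Ds j \<in> Tr T A B'" if "j \<in> J" for j using D[OF that] G by auto
    fix S r e assume r: "r \<in> Tr T II (sc T A S)" and e: "e \<in> Tr T (sc T B' S) II"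
    have e': "e \<circ>\<^sub>T (G \<otimes>\<^sub>T ID S) \<in> Tr T (sc T B S) II" using e parc_Tr[OF G idt_Tr, of S] by auto
    have "ext_prob T (G \<circ>\<^sub>T C) S r e = ext_prob T C S r (e \<circ>\<^sub>T (G \<otimes>\<^sub>T ID S))"
      by (rule ep_comp_l[OF C G r e])
    also have "\<dots> = (\<Sum>j\<in>J. ext_prob T (Ds j) S r (e \<circ>\<^sub>T (G \<otimes>\<^sub>T ID S)))"
      using s r e' unfolding issum_def by blast
    also have "\<dots> = (\<Sum>j\<in>J. ext_prob T (G \<circ>\<^sub>T Ds j) S r e)"
      using ep_comp_l[OF D G r e] by simp
    finally show "ext_prob T (G \<circ>\<^sub>T C) S r e = (\<Sum>j\<in>J. ext_prob T (G \<circ>\<^sub>T Ds j) S r e)" .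
  qed
qed

lemma issum_comp_r:
  assumes s: "issum B B' G Gs J" and C: "C \<in> Tr T A B"
  shows "issum A B' (G \<circ>\<^sub>T C) (\<lambda>j. Gs j \<circ>\<^sub>T C) J"
proof -
  have G: "G \<in> Tr T B B'" and D: "\<And>j. j \<in> J \<Longrightarrow> Gs j \<in> Tr T B B'" using s by (auto simp: issum_def)
  show ?thesis unfolding issum_def
  proof (intro conjI ballI allI)
    show "finite J" using s by (simp add: issum_def)
    show "G \<circ>\<^sub>T C \<in> Tr T A B'" using C G by auto
    show "Gs j \<circ>\<^sub>T C \<in> Tr T A B'" if "j \<in> J" for j using D[OF that] C by auto
    fix S r e assume r: "r \<in> Tr T II (sc T A S)" and e: "e \<in> Tr T (sc T B' S) II"
    have r': "(C \<otimes>\<^sub>T ID S) \<circ>\<^sub>T r \<in> Tr T II (sc T B S)" using r parc_Tr[OF C idt_Tr, of S] by auto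
    have "ext_prob T (G \<circ>\<^sub>T C) S r e = ext_prob T G S ((C \<otimes>\<^sub>T ID S) \<circ>\<^sub>T r) e"
      by (rule ep_comp_r[OF C G r e])
    also have "\<dots> = (\<Sum>j\<in>J. ext_prob T (Gs j) S ((C \<otimes>\<^sub>T ID S) \<circ>\<^sub>T r) e)"
      using s r' e unfolding issum_def by blast
    also have "\<dots> = (\<Sum>j\<in>J. ext_prob T (Gs j \<circ>\<^sub>T C) S r e)"
      using ep_comp_r[OF C D r e] by simp
    finally show "ext_prob T (G \<circ>\<^sub>T C) S r e = (\<Sum>j\<in>J. ext_prob T (Gs j \<circ>\<^sub>T C) S r e)" .
  qed
qed

lemma swp_conj:
  assumes G: "G \<in> Tr T A B"
  shows "ID X \<otimes>\<^sub>T (G \<otimes>\<^sub>T ID S) = swp T (sc T B S) X \<circ>\<^sub>T ((G \<otimes>\<^sub>T ID (sc T S X)) \<circ>\<^sub>T swp T X (sc T A S))"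
proof -
  have G1: "G \<otimes>\<^sub>T ID S \<in> Tr T (sc T A S) (sc T B S)" using parc_Tr[OF G idt_Tr] .
  have M: "ID X \<otimes>\<^sub>T (G \<otimes>\<^sub>T ID S) \<in> Tr T (sc T X (sc T A S)) (sc T X (sc T B S))"
    using parc_Tr[OF idt_Tr G1] .
  have n: "swp T X (sc T B S) \<circ>\<^sub>T (ID X \<otimes>\<^sub>T (G \<otimes>\<^sub>T ID S)) = ((G \<otimes>\<^sub>T ID S) \<otimes>\<^sub>T ID X) \<circ>\<^sub>T swp T X (sc T A S)"
    using swp_natural[OF idt_Tr G1] .
  have a: "(G \<otimes>\<^sub>T ID S) \<otimes>\<^sub>T ID X = G \<otimes>\<^sub>T ID (sc T S X)"
    using parc_assoc[OF G idt_Tr idt_Tr] parc_id by simp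
  have "ID X \<otimes>\<^sub>T (G \<otimes>\<^sub>T ID S) = (swp T (sc T B S) X \<circ>\<^sub>T swp T X (sc T B S)) \<circ>\<^sub>T (ID X \<otimes>\<^sub>T (G \<otimes>\<^sub>T ID S))"
    using swp_inv[of "sc T B S" X] seqc_id_l[OF M] by simp
  also have "\<dots> = swp T (sc T B S) X \<circ>\<^sub>T (swp T X (sc T B S) \<circ>\<^sub>T (ID X \<otimes>\<^sub>T (G \<otimes>\<^sub>T ID S)))"
    using seqc_assoc'[OF M swp_Tr swp_Tr] .
  finally show ?thesis using n a by simp
qed

lemma ep_tensor_l:
  assumes G: "G \<in> Tr T A B" and r: "r \<in> Tr T II (sc T (sc T X A) S)"
    and e: "e \<in> Tr T (sc T (sc T X B) S) II"
  shows "ext_prob T (ID X \<otimes>\<^sub>T G) S r e =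
         ext_prob T G (sc T S X) (swp T X (sc T A S) \<circ>\<^sub>T r) (e \<circ>\<^sub>T swp T (sc T B S) X)"
proof -
  have a: "(ID X \<otimes>\<^sub>T G) \<otimes>\<^sub>T ID S = ID X \<otimes>\<^sub>T (G \<otimes>\<^sub>T ID S)"
    using parc_assoc[OF idt_Tr G idt_Tr] by simp
  have sw1: "swp T X (sc T A S) \<in> Tr T (sc T X (sc T A S)) (sc T A (sc T S X))" using swp_Tr[of X "sc T A S"] by simp
  have sw2: "swp T (sc T B S) X \<in> Tr T (sc T B (sc T S X)) (sc T X (sc T B S))" using swp_Tr[of "sc T B S" X] by simp
  have G2: "G \<otimes>\<^sub>T ID (sc T S X) \<in> Tr T (sc T A (sc T S X)) (sc T B (sc T S X))" using parc_Tr[OF G idt_Tr] .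
  have r': "r \<in> Tr T II (sc T X (sc T A S))" using r by simp
  have e1: "(swp T (sc T B S) X \<circ>\<^sub>T (G \<otimes>\<^sub>T ID (sc T S X) \<circ>\<^sub>T swp T X (sc T A S))) \<circ>\<^sub>T r
      = swp T (sc T B S) X \<circ>\<^sub>T (G \<otimes>\<^sub>T ID (sc T S X) \<circ>\<^sub>T (swp T X (sc T A S) \<circ>\<^sub>T r))"
    using seqc_assoc'[OF r' Tr_seq[OF sw1 G2] sw2] seqc_assoc'[OF r' sw1 G2] by simp
  have e2: "e \<circ>\<^sub>T (swp T (sc T B S) X \<circ>\<^sub>T (G \<otimes>\<^sub>T ID (sc T S X) \<circ>\<^sub>T (swp T X (sc T A S) \<circ>\<^sub>T r)))
     = (e \<circ>\<^sub>T swp T (sc T B S) X) \<circ>\<^sub>T (G \<otimes>\<^sub>T ID (sc T S X) \<circ>\<^sub>T (swp T X (sc T A S) \<circ>\<^sub>T r))"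
    if "e \<in> Tr T (sc T X (sc T B S)) II"
    using seqc_assoc'[OF Tr_seq[OF Tr_seq[OF r' sw1] G2] sw2 that] by simp
  show ?thesis unfolding ext_prob_def a swp_conj[OF G] e1
    using e2 e by simp
qed

end

context opt begin

lemma issum_tensor_l:
  assumes s: "issum A B G Gs J"
  shows "issum (sc T X A) (sc T X B) (ID X \<otimes>\<^sub>T G) (\<lambda>j. ID X \<otimes>\<^sub>T Gs j) J"
proof -
  have G: "G \<in> Tr T A B" and D: "\<And>j. j \<in> J \<Longrightarrow> Gs j \<in> Tr T A B" using s by (auto simp: issum_def)
  show ?thesis unfolding issum_def
  proof (intro conjI ballI allI)
    show "finite J" using s by (simp add: issum_def)
    show "ID X \<otimes>\<^sub>T G \<in> Tr T (sc T X A) (sc T X B)" using parc_Tr[OF idt_Tr G] .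
    show "ID X \<otimes>\<^sub>T Gs j \<in> Tr T (sc T X A) (sc T X B)" if "j \<in> J" for j using parc_Tr[OF idt_Tr D[OF that]] .
    fix S r e assume r: "r \<in> Tr T II (sc T (sc T X A) S)" and e: "e \<in> Tr T (sc T (sc T X B) S) II"
    have r0: "r \<in> Tr T II (sc T X (sc T A S))" using r by simp
    have r': "swp T X (sc T A S) \<circ>\<^sub>T r \<in> Tr T II (sc T A (sc T S X))"
      using Tr_seq[OF r0 swp_Tr[of X "sc T A S"]] by simp
    have e0: "e \<in> Tr T (sc T X (sc T B S)) II" using e by simp
    have e': "e \<circ>\<^sub>T swp T (sc T B S) X \<in> Tr T (sc T B (sc T S X)) II"
      using Tr_seq[OF swp_Tr[of "sc T B S" X] e0] by simp
    have "ext_prob T (ID X \<otimes>\<^sub>T G) S r e = ext_prob T G (sc T S X) (swp T X (sc T A S) \<circ>\<^sub>T r) (e \<circ>\<^sub>T swp T (sc T B S) X)"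
      by (rule ep_tensor_l[OF G r e])
    also have "\<dots> = (\<Sum>j\<in>J. ext_prob T (Gs j) (sc T S X) (swp T X (sc T A S) \<circ>\<^sub>T r) (e \<circ>\<^sub>T swp T (sc T B S) X))"
      using s r' e' unfolding issum_def by auto
    also have "\<dots> = (\<Sum>j\<in>J. ext_prob T (ID X \<otimes>\<^sub>T Gs j) S r e)"
      using ep_tensor_l[OF D r e] by simp
    finally show "ext_prob T (ID X \<otimes>\<^sub>T G) S r e = (\<Sum>j\<in>J. ext_prob T (ID X \<otimes>\<^sub>T Gs j) S r e)" .
  qed
qed

lemma issum_det:
  assumes Gs: "Gs \<in> Tests T B II"
  shows "issum B II (E B) (nth Gs) {..<length Gs}"
proof -
  have ne: "Gs \<noteq> []" using Tests_Tr[OF Gs] by simp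
  obtain Ds where Ds: "Ds \<in> Tests T B II" "length Ds = 1"
    "is_sum T B II (Ds ! 0) (map (nth Gs) (filter (\<lambda>i. (0::nat) = 0) [0..<length Gs]))"
    using coarse_test[OF Gs, of "\<lambda>_. 0" 1] ne by auto
  have "Ds = [Ds ! 0]" using Ds(2) by (cases Ds) auto
  then have "Ds ! 0 = E B" using det_unique Ds(1) by metis
  moreover have "sorted_list_of_set {..<length Gs} = [0..<length Gs]"
    by (simp add: lessThan_atLeast0)
  ultimately show ?thesis using Ds(3) is_sum_issum[of "{..<length Gs}"] by simp
qed

lemma ep_state:
  assumes C: "C \<in> Tr T II X" and r: "r \<in> Tr T II S" and e: "e \<in> Tr T (sc T X S) II"
  shows "ext_prob T C S r e = prb T ((e \<circ>\<^sub>T (ID X \<otimes>\<^sub>T r)) \<circ>\<^sub>T C)"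
proof -
  have r1: "ID X \<otimes>\<^sub>T r \<in> Tr T X (sc T X S)" using parc_Tr[OF idt_Tr r, of X] by simp
  have "(C \<otimes>\<^sub>T ID S) \<circ>\<^sub>T r = (ID X \<otimes>\<^sub>T r) \<circ>\<^sub>T C"
    using state_par[OF C r] state_par'[OF C r] by simp
  then show ?thesis unfolding ext_prob_def using seqc_assoc'[OF C r1 e] by simp
qed

lemma ep_state_I:
  assumes C: "C \<in> Tr T II X" and e: "e \<in> Tr T X II"
  shows "ext_prob T C II (ID II) e = prb T (e \<circ>\<^sub>T C)"
proof -
  have "ID X \<otimes>\<^sub>T ID II = ID X" using parc_id[of X II] by simp
  then show ?thesis using ep_state[OF C idt_Tr, of e] e seqc_id_r[OF e] by simp
qed

lemma issum_state_iff:
  assumes "finite J" and C: "C \<in> Tr T II X" and D: "\<And>j. j \<in> J \<Longrightarrow> Ds j \<in> Tr T II X"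
  shows "issum II X C Ds J \<longleftrightarrow> (\<forall>a\<in>Tr T X II. prb T (a \<circ>\<^sub>T C) = (\<Sum>j\<in>J. prb T (a \<circ>\<^sub>T Ds j)))"
proof
  assume s: "issum II X C Ds J"
  show "\<forall>a\<in>Tr T X II. prb T (a \<circ>\<^sub>T C) = (\<Sum>j\<in>J. prb T (a \<circ>\<^sub>T Ds j))"
  proof
    fix a assume a: "a \<in> Tr T X II"
    have "ext_prob T C II (ID II) a = (\<Sum>j\<in>J. ext_prob T (Ds j) II (ID II) a)"
      using s a unfolding issum_def by auto
    then show "prb T (a \<circ>\<^sub>T C) = (\<Sum>j\<in>J. prb T (a \<circ>\<^sub>T Ds j))"
      using ep_state_I[OF C a] ep_state_I[OF D a] by simp
  qed
next
  assume h: "\<forall>a\<in>Tr T X II. prb T (a \<circ>\<^sub>T C) = (\<Sum>j\<in>J. prb T (a \<circ>\<^sub>T Ds j))"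
  show "issum II X C Ds J" unfolding issum_def
  proof (intro conjI ballI allI)
    show "finite J" "C \<in> Tr T II X" using assms by auto
    show "Ds j \<in> Tr T II X" if "j \<in> J" for j using D that .
    fix S r e assume r: "r \<in> Tr T II (sc T II S)" and e: "e \<in> Tr T (sc T X S) II"
    have r': "r \<in> Tr T II S" using r by simp
    have a: "e \<circ>\<^sub>T (ID X \<otimes>\<^sub>T r) \<in> Tr T X II"
      using Tr_seq[OF parc_Tr[OF idt_Tr r', of X] e] by simp
    show "ext_prob T C S r e = (\<Sum>j\<in>J. ext_prob T (Ds j) S r e)"
      using ep_state[OF C r' e] ep_state[OF D r' e] h a by simp
  qed
qed

lemma acts_lin_state_iff:
  assumes D: "D \<in> Tr T II X" and C: "C \<in> Tr T II X"
  shows "acts_lin T II X D [(l, C)] \<longleftrightarrow> (\<forall>a\<in>Tr T X II. prb T (a \<circ>\<^sub>T D) = l * prb T (a \<circ>\<^sub>T C))"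
proof
  assume s: "acts_lin T II X D [(l, C)]"
  show "\<forall>a\<in>Tr T X II. prb T (a \<circ>\<^sub>T D) = l * prb T (a \<circ>\<^sub>T C)"
  proof
    fix a assume a: "a \<in> Tr T X II"
    have "ext_prob T D II (ID II) a = l * ext_prob T C II (ID II) a"
      using s a unfolding acts_lin_def by auto
    then show "prb T (a \<circ>\<^sub>T D) = l * prb T (a \<circ>\<^sub>T C)"
      using ep_state_I[OF C a] ep_state_I[OF D a] by simp
  qed
next
  assume h: "\<forall>a\<in>Tr T X II. prb T (a \<circ>\<^sub>T D) = l * prb T (a \<circ>\<^sub>T C)"
  show "acts_lin T II X D [(l, C)]" unfolding acts_lin_def
  proof (intro conjI)
    show "D \<in> Tr T II X" using D .
    show "\<forall>(c, D)\<in>set [(l, C)]. D \<in> Tr T II X" using C by auto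
    show "\<forall>S. \<forall>r\<in>Tr T II (sc T II S). \<forall>e\<in>Tr T (sc T X S) II. ext_prob T D S r e = sum_list (map (\<lambda>(c, D). c * ext_prob T D S r e) [(l, C)])"
    proof (intro allI ballI)
    fix S r e assume r: "r \<in> Tr T II (sc T II S)" and e: "e \<in> Tr T (sc T X S) II"
    have r': "r \<in> Tr T II S" using r by simp
    have a: "e \<circ>\<^sub>T (ID X \<otimes>\<^sub>T r) \<in> Tr T X II"
      using Tr_seq[OF parc_Tr[OF idt_Tr r', of X] e] by simp
    show "ext_prob T D S r e = sum_list (map (\<lambda>(c, D). c * ext_prob T D S r e) [(l, C)])"
      using ep_state[OF C r' e] ep_state[OF D r' e] h a by simp
  qed
  qed
qed

lemma state_scalar: "h \<in> Tr T II X \<Longrightarrow> p \<in> Tr T II II \<Longrightarrow> h \<otimes>\<^sub>T p = h \<circ>\<^sub>T p"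
  using state_par'[of h X p II] by simp

lemma norm_det: "\<rho> \<in> St1 T X \<Longrightarrow> E X \<circ>\<^sub>T \<rho> = ID II"
  unfolding St1_def normalized_def St_def
  by (auto intro!: prb_eq_Id)

lemma St1_Tr: "\<rho> \<in> St1 T X \<Longrightarrow> \<rho> \<in> Tr T II X"
  unfolding St1_def normalized_def St_def by auto

lemma swpII: "swp T II II = ID II"
proof -
  have s: "swp T II II \<in> Tr T II II" using swp_Tr[of II II] by simp
  have "prb T (swp T II II) * prb T (swp T II II) = 1"
    using swp_inv[of II II] prb_seqc[OF s s] by simp
  moreover have "prb T (swp T II II) \<ge> 0" using prb_range[OF s] by simp
  ultimately have "prb T (swp T II II) = 1"
    by (metis abs_of_nonneg abs_square_eq_1 one_power2 power2_eq_square)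
  then show ?thesis using prb_eq_Id[OF s] by simp
qed

lemma det_swp: "E (sc T B A) \<circ>\<^sub>T swp T A B = E (sc T A B)"
proof -
  have "swp T II II \<circ>\<^sub>T (E A \<otimes>\<^sub>T E B) = (E B \<otimes>\<^sub>T E A) \<circ>\<^sub>T swp T A B"
    using swp_natural[OF det_Tr det_Tr] by simp
  moreover have "E A \<otimes>\<^sub>T E B \<in> Tr T (sc T A B) II" using parc_Tr[OF det_Tr det_Tr, of A B] by simp
  ultimately show ?thesis using causal_par[of A B] causal_par[of B A] swpII seqc_id_l by metis
qed

end

lemma concat_uniform_length:
  "(\<forall>x\<in>set xs. length (f x) = m) \<Longrightarrow> length (concat (map f xs)) = length xs * m"
  by (induction xs) auto

lemma nth_concat_uniform:
  "(\<forall>x\<in>set xs. length (f x) = m) \<Longrightarrow> j < length xs \<Longrightarrow> k < m \<Longrightarrow>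
   concat (map f xs) ! (j*m+k) = f (xs!j) ! k"
proof (induction xs arbitrary: j)
  case Nil then show ?case by simp
next
  case (Cons x xs)
  show ?case
  proof (cases j)
    case 0 then show ?thesis using Cons by (simp add: nth_append)
  next
    case (Suc j')
    have "concat (map f (x # xs)) ! (j*m+k) = concat (map f xs) ! (j'*m+k)"
      using Cons.prems Suc by (simp add: nth_append algebra_simps)
    then show ?thesis using Cons Suc by simp
  qed
qed

context opt begin

lemma issum_reindex:
  assumes s: "issum A B C Ds J" and inj: "inj_on h J" and eq: "\<forall>j\<in>J. Fs (h j) = Ds j"
  shows "issum A B C Fs (h ` J)"
  using s unfolding issum_def
  by (auto simp: sum.reindex[OF inj] eq)

lemma issum_double:
  assumes s: "issum A B C F K" and t: "\<forall>k\<in>K. issum A B (F k) (H k) J" and fJ: "finite J"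
  shows "issum A B C (\<lambda>(k,j). H k j) (K \<times> J)"
  unfolding issum_def
proof (intro conjI ballI allI)
  show "finite (K \<times> J)" using s fJ by (simp add: issum_def)
  show "C \<in> Tr T A B" using s by (simp add: issum_def)
  show "(case x of (k, j) \<Rightarrow> H k j) \<in> Tr T A B" if "x \<in> K \<times> J" for x
    using that t by (auto simp: issum_def)
  fix S r e assume r: "r \<in> Tr T II (sc T A S)" and e: "e \<in> Tr T (sc T B S) II"
  have "ext_prob T C S r e = (\<Sum>k\<in>K. ext_prob T (F k) S r e)" using s r e by (simp add: issum_def)
  also have "\<dots> = (\<Sum>k\<in>K. \<Sum>j\<in>J. ext_prob T (H k j) S r e)"
    using t r e by (intro sum.cong) (auto simp: issum_def)
  also have "\<dots> = (\<Sum>x\<in>K \<times> J. ext_prob T (case x of (k, j) \<Rightarrow> H k j) S r e)"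
    by (simp add: sum.cartesian_product split_def)
  finally show "ext_prob T C S r e = (\<Sum>x\<in>K \<times> J. ext_prob T (case x of (k, j) \<Rightarrow> H k j) S r e)" .
qed

lemma refines_iff:
  "refines T A B D C \<longleftrightarrow> (\<exists>Ds\<in>Tests T A B. \<exists>Y0. Y0 \<subseteq> {..<length Ds} \<and> issum A B C (nth Ds) Y0 \<and> D \<in> nth Ds ` Y0)"
  unfolding refines_def using is_sum_issum finite_subset[OF _ finite_lessThan] by meson

lemma refine_seqK:
  assumes Es: "Es \<in> Tests T A B" and Y0: "Y0 \<subseteq> {..<length Es}" and sC: "issum A B C (nth Es) Y0"
    and Gs: "Gs \<in> Tests T B B'" and K: "K \<subseteq> {..<length Gs}" and sG: "issum B B' G (nth Gs) K"
    and j1: "j1 \<in> Y0" and k1: "k1 \<in> K"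
  shows "refines T A B' ((Gs!k1) \<circ>\<^sub>T (Es!j1)) (G \<circ>\<^sub>T C)"
proof -
  define m where "m = length Gs"
  define Big where "Big = concat (map (\<lambda>c. map (\<lambda>d. d \<circ>\<^sub>T c) Gs) Es)"
  have Big: "Big \<in> Tests T A B'" unfolding Big_def using seq_test[OF Es Gs] .
  have un: "\<forall>x\<in>set Es. length (map (\<lambda>d. d \<circ>\<^sub>T x) Gs) = m" by (simp add: m_def)
  have lenB: "length Big = length Es * m" unfolding Big_def using concat_uniform_length[OF un] .
  have nthB: "Big ! (j*m+k) = Gs!k \<circ>\<^sub>T Es!j" if "j < length Es" "k < m" for j k
    unfolding Big_def using nth_concat_uniform[OF un that] that by (simp add: m_def)
  have C: "C \<in> Tr T A B" using sC by (simp add: issum_def)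
  have GsTr: "Gs ! k \<in> Tr T B B'" if "k \<in> K" for k
  proof -
    have "k < length Gs" using that K by auto
    then show ?thesis using Tests_Tr[OF Gs] nth_mem by blast
  qed
  have s1: "issum A B' (G \<circ>\<^sub>T C) (\<lambda>k. Gs!k \<circ>\<^sub>T C) K"
    using issum_comp_r[OF sG C] by (simp add: m_def)
  have s2: "\<forall>k\<in>K. issum A B' (Gs!k \<circ>\<^sub>T C) (\<lambda>j. Gs!k \<circ>\<^sub>T Es!j) Y0"
    using issum_comp_l[OF sC GsTr] by auto
  have fY: "finite Y0" using Y0 finite_subset by blast
  have s3: "issum A B' (G \<circ>\<^sub>T C) (\<lambda>(k,j). Gs!k \<circ>\<^sub>T Es!j) (K \<times> Y0)"
    using issum_double[OF s1 s2 fY] .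
  define h where "h = (\<lambda>(k::nat, j::nat). j*m+k)"
  have inj: "inj_on h (K \<times> Y0)"
  proof (rule inj_onI)
    fix x y assume x: "x \<in> K \<times> Y0" and y: "y \<in> K \<times> Y0" and hxy: "h x = h y"
    obtain k j k' j' where xy: "x = (k,j)" "y = (k',j')" by (cases x, cases y) auto
    have "k < m" "k' < m" using x y xy K by (auto simp: m_def)
    moreover have "j*m+k = j'*m+k'" using hxy xy by (simp add: h_def)
    ultimately have "k = k'"
      by (metis mod_mult_self3 mod_less)
    moreover have "j*m = j'*m" using \<open>j*m+k = j'*m+k'\<close> \<open>k = k'\<close> by simp
    moreover have "m > 0" using \<open>k < m\<close> by simp
    ultimately have "k = k'" "j = j'" by auto
    then show "x = y" using xy by simp
  qed
  have eq: "\<forall>x\<in>K \<times> Y0. Big ! (h x) = (case x of (k,j) \<Rightarrow> Gs!k \<circ>\<^sub>T Es!j)"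
    using nthB Y0 K by (auto simp: h_def m_def)
  have s4: "issum A B' (G \<circ>\<^sub>T C) (nth Big) (h ` (K \<times> Y0))"
    using issum_reindex[OF s3 inj eq] .
  have sub: "h ` (K \<times> Y0) \<subseteq> {..<length Big}"
  proof
    fix x assume "x \<in> h ` (K \<times> Y0)"
    then obtain k j where kj: "k < m" "j \<in> Y0" "x = j*m+k" using K by (auto simp: h_def m_def)
    then have "j < length Es" using Y0 by auto
    then have "j*m + k < (j+1)*m" using kj by simp
    also have "\<dots> \<le> length Es * m" using \<open>j < length Es\<close> mult_le_mono1[of "j+1" "length Es" m] by simp
    finally show "x \<in> {..<length Big}" using kj lenB by simp
  qed
  have mem: "(Gs!k1) \<circ>\<^sub>T (Es!j1) \<in> nth Big ` (h ` (K \<times> Y0))"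
    using nthB[of j1 k1] j1 k1 Y0 K by (force simp: h_def m_def)
  show ?thesis unfolding refines_iff using Big sub s4 mem by blast
qed

lemma refine_seq:
  assumes Es: "Es \<in> Tests T A B" and Y0: "Y0 \<subseteq> {..<length Es}" and sC: "issum A B C (nth Es) Y0"
    and Gs: "Gs \<in> Tests T B B'" and sG: "issum B B' G (nth Gs) {..<length Gs}"
    and j1: "j1 \<in> Y0" and k1: "k1 < length Gs"
  shows "refines T A B' ((Gs!k1) \<circ>\<^sub>T (Es!j1)) (G \<circ>\<^sub>T C)"
  using refine_seqK[OF Es Y0 sC Gs _ sG j1] k1 by simp

end

context opt begin
lemma TrP: "f \<in> Tr T A B \<Longrightarrow> g \<in> Tr T C D \<Longrightarrow> sc T A C = X \<Longrightarrow> sc T B D = Y \<Longrightarrow> f \<otimes>\<^sub>T g \<in> Tr T X Y"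
  using parc_Tr by blast
lemma TrS: "f \<in> Tr T A B \<Longrightarrow> g \<in> Tr T B' C \<Longrightarrow> B' = B \<Longrightarrow> g \<circ>\<^sub>T f \<in> Tr T A C"
  using seqc_Tr by blast
lemma TrW: "sc T A B = X \<Longrightarrow> sc T B A = Y \<Longrightarrow> swp T A B \<in> Tr T X Y" using swp_Tr by blast
lemma TrI: "A = B \<Longrightarrow> ID A \<in> Tr T A B" by simp
lemma TrE: "B = II \<Longrightarrow> E A \<in> Tr T A B" by simp
lemmas TrR = TrP TrS TrW TrI TrE

lemma issum_single: "Ds j = C \<Longrightarrow> C \<in> Tr T A B \<Longrightarrow> issum A B C Ds {j}"
  unfolding issum_def by auto

lemma issum_tensor_r:
  assumes s: "issum A B G Gs J"
  shows "issum (sc T A Y) (sc T B Y) (G \<otimes>\<^sub>T ID Y) (\<lambda>j. Gs j \<otimes>\<^sub>T ID Y) J"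
proof -
  have G: "G \<in> Tr T A B" and D: "\<And>j. j \<in> J \<Longrightarrow> Gs j \<in> Tr T A B" using s by (auto simp: issum_def)
  have ep: "ext_prob T (F \<otimes>\<^sub>T ID Y) S r e = ext_prob T F (sc T Y S) r e" if "F \<in> Tr T A B" for F S r e
  proof -
    have "(F \<otimes>\<^sub>T ID Y) \<otimes>\<^sub>T ID S = F \<otimes>\<^sub>T ID (sc T Y S)"
      using parc_assoc[OF that idt_Tr idt_Tr] parc_id by simp
    then show ?thesis unfolding ext_prob_def by simp
  qed
  show ?thesis unfolding issum_def
  proof (intro conjI ballI allI)
    show "finite J" using s by (simp add: issum_def)
    show "G \<otimes>\<^sub>T ID Y \<in> Tr T (sc T A Y) (sc T B Y)" using parc_Tr[OF G idt_Tr] .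
    show "Gs j \<otimes>\<^sub>T ID Y \<in> Tr T (sc T A Y) (sc T B Y)" if "j \<in> J" for j using parc_Tr[OF D[OF that] idt_Tr] .
    fix S r e assume r: "r \<in> Tr T II (sc T (sc T A Y) S)" and e: "e \<in> Tr T (sc T (sc T B Y) S) II"
    have "ext_prob T G (sc T Y S) r e = (\<Sum>j\<in>J. ext_prob T (Gs j) (sc T Y S) r e)"
      using s r e unfolding issum_def by auto
    then show "ext_prob T (G \<otimes>\<^sub>T ID Y) S r e = (\<Sum>j\<in>J. ext_prob T (Gs j \<otimes>\<^sub>T ID Y) S r e)"
      using ep[OF G] ep[OF D] by simp
  qed
qed

lemma par_test_left: "Cs \<in> Tests T C D \<Longrightarrow> map (parc T (ID X)) Cs \<in> Tests T (sc T X C) (sc T X D)"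
  using par_test[OF idt_test[of X]] by simp

lemma par_test_right: "Cs \<in> Tests T C D \<Longrightarrow> map (\<lambda>c. c \<otimes>\<^sub>T ID Y) Cs \<in> Tests T (sc T C Y) (sc T D Y)"
proof -
  assume Cs: "Cs \<in> Tests T C D"
  have "concat (map (\<lambda>c. map (parc T c) [ID Y]) Cs) = map (\<lambda>c. c \<otimes>\<^sub>T ID Y) Cs"
    by (induction Cs) auto
  then show ?thesis using par_test[OF Cs idt_test[of Y]] by simp
qed

lemma refine_eff_l:
  assumes Es: "Es \<in> Tests T II (sc T X Y)" and Y0: "Y0 \<subseteq> {..<length Es}"
    and sC: "issum II (sc T X Y) C (nth Es) Y0" and j1: "j1 \<in> Y0" and b: "b \<in> Tr T Y II"
  shows "refines T II X ((ID X \<otimes>\<^sub>T b) \<circ>\<^sub>T Es!j1) ((ID X \<otimes>\<^sub>T E Y) \<circ>\<^sub>T C)"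
proof -
  obtain Bs where Bs: "Bs \<in> Tests T Y II" "b \<in> set Bs" using Tr_in_test[OF b] by blast
  obtain kb where kb: "kb < length Bs" "Bs ! kb = b" using Bs(2) by (metis in_set_conv_nth)
  define Gs where "Gs = map (parc T (ID X)) Bs"
  have Gs: "Gs \<in> Tests T (sc T X Y) X" using par_test_left[OF Bs(1), of X] by (simp add: Gs_def)
  have sG: "issum (sc T X Y) X (ID X \<otimes>\<^sub>T E Y) (nth Gs) {..<length Gs}"
  proof -
    have "issum (sc T X Y) (sc T X II) (ID X \<otimes>\<^sub>T E Y) (\<lambda>j. ID X \<otimes>\<^sub>T (Bs ! j)) {..<length Bs}"
      using issum_tensor_l[OF issum_det[OF Bs(1)]] .
    moreover have "(\<lambda>j. ID X \<otimes>\<^sub>T (Bs ! j)) = (\<lambda>j. ID X \<otimes>\<^sub>T (Bs ! j))" ..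
    ultimately show ?thesis unfolding issum_def Gs_def by auto
  qed
  have "Gs ! kb = ID X \<otimes>\<^sub>T b" using kb by (simp add: Gs_def)
  then show ?thesis using refine_seq[OF Es Y0 sC Gs sG j1, of kb] kb by (simp add: Gs_def)
qed

lemma refine_eff_r:
  assumes Es: "Es \<in> Tests T II (sc T X Y)" and Y0: "Y0 \<subseteq> {..<length Es}"
    and sC: "issum II (sc T X Y) C (nth Es) Y0" and j1: "j1 \<in> Y0" and a: "a \<in> Tr T X II"
  shows "refines T II Y ((a \<otimes>\<^sub>T ID Y) \<circ>\<^sub>T Es!j1) ((E X \<otimes>\<^sub>T ID Y) \<circ>\<^sub>T C)"
proof -
  obtain Bs where Bs: "Bs \<in> Tests T X II" "a \<in> set Bs" using Tr_in_test[OF a] by blast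
  obtain kb where kb: "kb < length Bs" "Bs ! kb = a" using Bs(2) by (metis in_set_conv_nth)
  define Gs where "Gs = map (\<lambda>c. c \<otimes>\<^sub>T ID Y) Bs"
  have Gs: "Gs \<in> Tests T (sc T X Y) Y" using par_test_right[OF Bs(1), of Y] by (simp add: Gs_def)
  have sG: "issum (sc T X Y) Y (E X \<otimes>\<^sub>T ID Y) (nth Gs) {..<length Gs}"
  proof -
    have "issum (sc T X Y) (sc T II Y) (E X \<otimes>\<^sub>T ID Y) (\<lambda>j. (Bs ! j) \<otimes>\<^sub>T ID Y) {..<length Bs}"
      using issum_tensor_r[OF issum_det[OF Bs(1)]] .
    then show ?thesis unfolding issum_def Gs_def by auto
  qed
  have "Gs ! kb = a \<otimes>\<^sub>T ID Y" using kb by (simp add: Gs_def)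
  then show ?thesis using refine_seq[OF Es Y0 sC Gs sG j1, of kb] kb by (simp add: Gs_def)
qed

lemma refines_Tr: "refines T A B D C \<Longrightarrow> D \<in> Tr T A B"
proof -
  assume "refines T A B D C"
  then obtain Ds Y0 x where "Ds \<in> Tests T A B" "Y0 \<subseteq> {..<length Ds}" "x \<in> Y0" "D = Ds ! x"
    unfolding refines_def by blast
  moreover then have "x < length Ds" by auto
  ultimately show ?thesis using Tests_Tr nth_mem by blast
qed

lemma pure_prop:
  assumes "pure_state T X \<Psi>" "refines T II X D \<Psi>"
  shows "\<exists>l\<in>{0..1}. \<forall>a\<in>Tr T X II. prb T (a \<circ>\<^sub>T D) = l * prb T (a \<circ>\<^sub>T \<Psi>)"
proof -
  have P: "\<Psi> \<in> Tr T II X" using assms(1) by (simp add: pure_state_def atomic_def)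
  obtain l where "l \<in> {0..1}" "acts_lin T II X D [(l, \<Psi>)]" using assms unfolding pure_state_def atomic_def by blast
  then show ?thesis using acts_lin_state_iff[OF refines_Tr[OF assms(2)] P] by blast
qed

lemma local_discr':
  assumes "\<rho> \<in> Tr T II (sc T A B)" "\<sigma> \<in> Tr T II (sc T A B)"
    "\<forall>a\<in>Tr T A II. \<forall>b\<in>Tr T B II. prb T ((a \<otimes>\<^sub>T b) \<circ>\<^sub>T \<rho>) = prb T ((a \<otimes>\<^sub>T b) \<circ>\<^sub>T \<sigma>)"
  shows "\<rho> = \<sigma>"
  using local_discr[of \<rho> A B \<sigma>] assms unfolding St_def Eff_def by auto

end

context opt begin

lemma assoc3: "f \<in> Tr T A B \<Longrightarrow> g \<in> Tr T B C \<Longrightarrow> h \<in> Tr T C D \<Longrightarrow> h \<circ>\<^sub>T (g \<circ>\<^sub>T f) = (h \<circ>\<^sub>T g) \<circ>\<^sub>T f"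
  by (rule seqc_assoc)

lemma eff_split_l: "a \<in> Tr T X II \<Longrightarrow> b \<in> Tr T Y II \<Longrightarrow> a \<otimes>\<^sub>T b = a \<circ>\<^sub>T (ID X \<otimes>\<^sub>T b)"
  using ic_split1[of a X II b Y II] by simp

lemma eff_split_r: "a \<in> Tr T X II \<Longrightarrow> b \<in> Tr T Y II \<Longrightarrow> a \<otimes>\<^sub>T b = b \<circ>\<^sub>T (a \<otimes>\<^sub>T ID Y)"
  using ic_split2[of a X II b Y II] by simp

lemma ic_states: "a \<in> Tr T X A \<Longrightarrow> b \<in> Tr T Y B \<Longrightarrow> \<Psi> \<in> Tr T II X \<Longrightarrow> \<Phi> \<in> Tr T II Y \<Longrightarrow>
   (a \<otimes>\<^sub>T b) \<circ>\<^sub>T (\<Psi> \<otimes>\<^sub>T \<Phi>) = (a \<circ>\<^sub>T \<Psi>) \<otimes>\<^sub>T (b \<circ>\<^sub>T \<Phi>)"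
  using interchange[of \<Psi> II X a A \<Phi> II Y b B] by simp

lemma prb_scal: "Z \<in> Tr T II W \<Longrightarrow> p \<in> Tr T II II \<Longrightarrow> a \<in> Tr T W II \<Longrightarrow>
    prb T (a \<circ>\<^sub>T (Z \<circ>\<^sub>T p)) = prb T (a \<circ>\<^sub>T Z) * prb T p"
  using assoc3[of p II II Z W a II] prb_seqc[of "a \<circ>\<^sub>T Z" p] by (simp add: Tr_seq)

lemma marg_l: "\<Psi> \<in> Tr T II X \<Longrightarrow> \<Phi> \<in> St1 T Y \<Longrightarrow> (ID X \<otimes>\<^sub>T E Y) \<circ>\<^sub>T (\<Psi> \<otimes>\<^sub>T \<Phi>) = \<Psi>"
  using ic_states[of "ID X" X X "E Y" Y II \<Psi> \<Phi>] St1_Tr norm_det seqc_id_l by simp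

lemma marg_r: "\<Psi> \<in> St1 T X \<Longrightarrow> \<Phi> \<in> Tr T II Y \<Longrightarrow> (E X \<otimes>\<^sub>T ID Y) \<circ>\<^sub>T (\<Psi> \<otimes>\<^sub>T \<Phi>) = \<Phi>"
  using ic_states[of "E X" X II "ID Y" Y Y \<Psi> \<Phi>] St1_Tr norm_det seqc_id_l by simp

lemma prb_det1: "\<Psi> \<in> St1 T X \<Longrightarrow> prb T (E X \<circ>\<^sub>T \<Psi>) = 1"
  using norm_det by simp

lemma pure_prod:
  assumes Ps: "\<Psi> \<in> St1 T X" and pP: "pure_state T X \<Psi>" and Ph: "\<Phi> \<in> St1 T Y" and pF: "pure_state T Y \<Phi>"
  shows "pure_state T (sc T X Y) (\<Psi> \<otimes>\<^sub>T \<Phi>)"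
proof -
  have P: "\<Psi> \<in> Tr T II X" and F: "\<Phi> \<in> Tr T II Y" using Ps Ph St1_Tr by auto
  have PF: "\<Psi> \<otimes>\<^sub>T \<Phi> \<in> Tr T II (sc T X Y)" using parc_Tr[OF P F] by simp
  show ?thesis unfolding pure_state_def atomic_def
  proof (intro conjI allI impI)
    show "\<Psi> \<otimes>\<^sub>T \<Phi> \<in> Tr T II (sc T X Y)" using PF .
    fix D assume R: "refines T II (sc T X Y) D (\<Psi> \<otimes>\<^sub>T \<Phi>)"
    then obtain Ds Y0 j1 where Ds: "Ds \<in> Tests T II (sc T X Y)" and Y0: "Y0 \<subseteq> {..<length Ds}"
      and s: "issum II (sc T X Y) (\<Psi> \<otimes>\<^sub>T \<Phi>) (nth Ds) Y0" and j1: "j1 \<in> Y0" and Dj: "D = Ds ! j1"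
      unfolding refines_iff by blast
    have hD: "D \<in> Tr T II (sc T X Y)" using refines_Tr[OF R] .
    have kl: "prb T ((a \<otimes>\<^sub>T b) \<circ>\<^sub>T D) = prb T (a \<circ>\<^sub>T ((ID X \<otimes>\<^sub>T b) \<circ>\<^sub>T D))"
      if a: "a \<in> Tr T X II" and b: "b \<in> Tr T Y II" for a b
    proof -
      have "ID X \<otimes>\<^sub>T b \<in> Tr T (sc T X Y) X" using parc_Tr[OF idt_Tr b, of X] by simp
      then show ?thesis using eff_split_l[OF a b] assoc3[OF hD _ a] by simp
    qed
    have kr: "prb T ((a \<otimes>\<^sub>T b) \<circ>\<^sub>T D) = prb T (b \<circ>\<^sub>T ((a \<otimes>\<^sub>T ID Y) \<circ>\<^sub>T D))"
      if a: "a \<in> Tr T X II" and b: "b \<in> Tr T Y II" for a b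
    proof -
      have "a \<otimes>\<^sub>T ID Y \<in> Tr T (sc T X Y) Y" using parc_Tr[OF a idt_Tr, of Y] by simp
      then show ?thesis using eff_split_r[OF a b] assoc3[OF hD _ b] by simp
    qed
    have lam: "prb T ((a \<otimes>\<^sub>T b) \<circ>\<^sub>T D) = prb T ((E X \<otimes>\<^sub>T b) \<circ>\<^sub>T D) * prb T (a \<circ>\<^sub>T \<Psi>)"
      if a: "a \<in> Tr T X II" and b: "b \<in> Tr T Y II" for a b
    proof -
      have "refines T II X ((ID X \<otimes>\<^sub>T b) \<circ>\<^sub>T Ds!j1) ((ID X \<otimes>\<^sub>T E Y) \<circ>\<^sub>T (\<Psi> \<otimes>\<^sub>T \<Phi>))"
        by (rule refine_eff_l[OF Ds Y0 s j1 b])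
      then have "refines T II X ((ID X \<otimes>\<^sub>T b) \<circ>\<^sub>T D) \<Psi>" using marg_l[OF P Ph] Dj by simp
      then obtain l where l: "\<forall>a\<in>Tr T X II. prb T (a \<circ>\<^sub>T ((ID X \<otimes>\<^sub>T b) \<circ>\<^sub>T D)) = l * prb T (a \<circ>\<^sub>T \<Psi>)"
        using pure_prop[OF pP] by blast
      have "prb T ((E X \<otimes>\<^sub>T b) \<circ>\<^sub>T D) = l" using l kl[OF det_Tr b] prb_det1[OF Ps] by simp
      then show ?thesis using l kl[OF a b] a by simp
    qed
    have mu: "prb T ((E X \<otimes>\<^sub>T b) \<circ>\<^sub>T D) = prb T ((E X \<otimes>\<^sub>T E Y) \<circ>\<^sub>T D) * prb T (b \<circ>\<^sub>T \<Phi>)"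
      if b: "b \<in> Tr T Y II" for b
    proof -
      have "refines T II Y ((E X \<otimes>\<^sub>T ID Y) \<circ>\<^sub>T Ds!j1) ((E X \<otimes>\<^sub>T ID Y) \<circ>\<^sub>T (\<Psi> \<otimes>\<^sub>T \<Phi>))"
        by (rule refine_eff_r[OF Ds Y0 s j1 det_Tr])
      then have "refines T II Y ((E X \<otimes>\<^sub>T ID Y) \<circ>\<^sub>T D) \<Phi>" using marg_r[OF Ps F] Dj by simp
      then obtain l where l: "\<forall>b\<in>Tr T Y II. prb T (b \<circ>\<^sub>T ((E X \<otimes>\<^sub>T ID Y) \<circ>\<^sub>T D)) = l * prb T (b \<circ>\<^sub>T \<Phi>)"
        using pure_prop[OF pF] by blast
      have "prb T ((E X \<otimes>\<^sub>T E Y) \<circ>\<^sub>T D) = l" using l kr[OF det_Tr det_Tr] prb_det1[OF Ph] by simp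
      then show ?thesis using l kr[OF det_Tr b] b by simp
    qed
    define p where "p = E (sc T X Y) \<circ>\<^sub>T D"
    have p: "p \<in> Tr T II II" unfolding p_def using hD by auto
    have prbp: "prb T p = prb T ((E X \<otimes>\<^sub>T E Y) \<circ>\<^sub>T D)" unfolding p_def using causal_par by simp
    have DPF: "D = (\<Psi> \<otimes>\<^sub>T \<Phi>) \<circ>\<^sub>T p"
    proof (rule local_discr')
      show "D \<in> Tr T II (sc T X Y)" using hD .
      show "(\<Psi> \<otimes>\<^sub>T \<Phi>) \<circ>\<^sub>T p \<in> Tr T II (sc T X Y)" using PF p by auto
      show "\<forall>a\<in>Tr T X II. \<forall>b\<in>Tr T Y II. prb T ((a \<otimes>\<^sub>T b) \<circ>\<^sub>T D) = prb T ((a \<otimes>\<^sub>T b) \<circ>\<^sub>T ((\<Psi> \<otimes>\<^sub>T \<Phi>) \<circ>\<^sub>T p))"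
      proof (intro ballI)
        fix a b assume a: "a \<in> Tr T X II" and b: "b \<in> Tr T Y II"
        have ab: "a \<otimes>\<^sub>T b \<in> Tr T (sc T X Y) II" using parc_Tr[OF a b] by simp
        have aP: "a \<circ>\<^sub>T \<Psi> \<in> Tr T II II" "b \<circ>\<^sub>T \<Phi> \<in> Tr T II II" using a b P F by auto
        have "prb T ((a \<otimes>\<^sub>T b) \<circ>\<^sub>T ((\<Psi> \<otimes>\<^sub>T \<Phi>) \<circ>\<^sub>T p)) = prb T ((a \<otimes>\<^sub>T b) \<circ>\<^sub>T (\<Psi> \<otimes>\<^sub>T \<Phi>)) * prb T p"
          using prb_scal[OF PF p ab] .
        also have "\<dots> = prb T (a \<circ>\<^sub>T \<Psi>) * prb T (b \<circ>\<^sub>T \<Phi>) * prb T p"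
          using ic_states[OF a b P F] prb_parc[OF aP] by simp
        finally show "prb T ((a \<otimes>\<^sub>T b) \<circ>\<^sub>T D) = prb T ((a \<otimes>\<^sub>T b) \<circ>\<^sub>T ((\<Psi> \<otimes>\<^sub>T \<Phi>) \<circ>\<^sub>T p))"
          using lam[OF a b] mu[OF b] prbp by simp
      qed
    qed
    have "acts_lin T II (sc T X Y) D [(prb T p, \<Psi> \<otimes>\<^sub>T \<Phi>)]"
      unfolding acts_lin_state_iff[OF hD PF] using DPF prb_scal[OF PF p] by simp
    moreover have "prb T p \<in> {0..1}" using prb_range[OF p] by simp
    ultimately show "\<exists>l\<in>{0..1}. acts_lin T II (sc T X Y) D [(l, \<Psi> \<otimes>\<^sub>T \<Phi>)]" by blast
  qed
qed

lemma pure_inv: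
  assumes pS: "pure_state T Y \<sigma>" and G: "G \<in> Tr T Y Y'" and H: "H \<in> Tr T Y' Y"
    and HG: "H \<circ>\<^sub>T G = ID Y" and GH: "G \<circ>\<^sub>T H = ID Y'"
  shows "pure_state T Y' (G \<circ>\<^sub>T \<sigma>)"
proof -
  have S: "\<sigma> \<in> Tr T II Y" using pS by (simp add: pure_state_def atomic_def)
  have GS: "G \<circ>\<^sub>T \<sigma> \<in> Tr T II Y'" using S G by auto
  show ?thesis unfolding pure_state_def atomic_def
  proof (intro conjI allI impI)
    show "G \<circ>\<^sub>T \<sigma> \<in> Tr T II Y'" using GS .
    fix D assume R: "refines T II Y' D (G \<circ>\<^sub>T \<sigma>)"
    then obtain Ds Y0 j1 where Ds: "Ds \<in> Tests T II Y'" and Y0: "Y0 \<subseteq> {..<length Ds}"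
      and s: "issum II Y' (G \<circ>\<^sub>T \<sigma>) (nth Ds) Y0" and j1: "j1 \<in> Y0" and Dj: "D = Ds ! j1"
      unfolding refines_iff by blast
    have hD: "D \<in> Tr T II Y'" using refines_Tr[OF R] .
    obtain Hs where Hs: "Hs \<in> Tests T Y' Y" "H \<in> set Hs" using Tr_in_test[OF H] by blast
    obtain kH where kH: "kH < length Hs" "Hs ! kH = H" using Hs(2) by (metis in_set_conv_nth)
    have "refines T II Y ((Hs!kH) \<circ>\<^sub>T (Ds!j1)) (H \<circ>\<^sub>T (G \<circ>\<^sub>T \<sigma>))"
      by (rule refine_seqK[OF Ds Y0 s Hs(1) _ issum_single[of "nth Hs" kH H, OF kH(2) H] j1]) (use kH in auto)
    moreover have "H \<circ>\<^sub>T (G \<circ>\<^sub>T \<sigma>) = \<sigma>" using assoc3[OF S G H] HG seqc_id_l[OF S] by simp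
    ultimately have "refines T II Y (H \<circ>\<^sub>T D) \<sigma>" using kH Dj by simp
    then obtain l where l01: "l \<in> {0..1}" and l: "\<forall>a\<in>Tr T Y II. prb T (a \<circ>\<^sub>T (H \<circ>\<^sub>T D)) = l * prb T (a \<circ>\<^sub>T \<sigma>)"
      using pure_prop[OF pS] by blast
    have "\<forall>a\<in>Tr T Y' II. prb T (a \<circ>\<^sub>T D) = l * prb T (a \<circ>\<^sub>T (G \<circ>\<^sub>T \<sigma>))"
    proof
      fix a assume a: "a \<in> Tr T Y' II"
      have aG: "a \<circ>\<^sub>T G \<in> Tr T Y II" using a G by auto
      have "a \<circ>\<^sub>T D = a \<circ>\<^sub>T ((G \<circ>\<^sub>T H) \<circ>\<^sub>T D)" using GH seqc_id_l[OF hD] by simp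
      also have "\<dots> = (a \<circ>\<^sub>T G) \<circ>\<^sub>T (H \<circ>\<^sub>T D)"
        using seqc_assoc'[OF hD H G] seqc_assoc'[OF Tr_seq[OF hD H] G a] by simp
      finally have "prb T (a \<circ>\<^sub>T D) = l * prb T ((a \<circ>\<^sub>T G) \<circ>\<^sub>T \<sigma>)" using l aG by simp
      then show "prb T (a \<circ>\<^sub>T D) = l * prb T (a \<circ>\<^sub>T (G \<circ>\<^sub>T \<sigma>))" using assoc3[OF S G a] by simp
    qed
    then show "\<exists>l\<in>{0..1}. acts_lin T II Y' D [(l, G \<circ>\<^sub>T \<sigma>)]"
      using acts_lin_state_iff[OF hD GS] l01 by blast
  qed
qed

end

lemma concat_pos:
  assumes "i < length Ls" "q < length (Ls!i)"
  shows "length (concat (take i Ls)) + q < length (concat Ls) \<and> concat Ls ! (length (concat (take i Ls)) + q) = Ls!i!q"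
proof -
  have e: "concat Ls = concat (take i Ls) @ (Ls!i) @ concat (drop (Suc i) Ls)"
    using id_take_nth_drop[OF assms(1)] by (metis concat.simps(2) concat_append)
  show ?thesis using assms(2) by (subst (1 2) e) (simp add: nth_append)
qed

lemma concat_take_mono: "i \<le> j \<Longrightarrow> length (concat (take i Ls)) \<le> length (concat (take j Ls))"
proof -
  assume "i \<le> j"
  then obtain d where "j = i + d" using le_Suc_ex by blast
  then show ?thesis by (simp add: take_add)
qed

lemma concat_pos_inj:
  assumes "i < length Ls" "q < length (Ls!i)" "i' < length Ls" "q' < length (Ls!i')"
    and eq: "length (concat (take i Ls)) + q = length (concat (take i' Ls)) + q'"
  shows "i = i' \<and> q = q'"
proof -
  have lt: "length (concat (take i Ls)) + q < length (concat (take i' Ls))"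
    if "i < i'" "i < length Ls" "q < length (Ls!i)" for i i' q
  proof -
    have "length (concat (take (Suc i) Ls)) = length (concat (take i Ls)) + length (Ls!i)"
      using that by (simp add: take_Suc_conv_app_nth)
    moreover have "length (concat (take (Suc i) Ls)) \<le> length (concat (take i' Ls))"
      using concat_take_mono[of "Suc i" i' Ls] that by simp
    ultimately show ?thesis using that by simp
  qed
  have "i = i'"
  proof (rule ccontr)
    assume "i \<noteq> i'"
    then consider "i < i'" | "i' < i" by linarith
    then show False
    proof cases
      case 1 then show False using lt[OF 1 assms(1,2)] eq by simp
    next
      case 2 then show False using lt[OF 2 assms(3,4)] eq by simp
    qed
  qed
  then show ?thesis using eq by simp
qed

lemma filter_sorted_set: "J \<subseteq> {..<n} \<Longrightarrow> filter (\<lambda>i. i \<in> J) [0..<n] = sorted_list_of_set J"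
proof -
  assume J: "J \<subseteq> {..<n}"
  have "set (filter (\<lambda>i. i \<in> J) [0..<n]) = J" using J by auto
  moreover have "sorted (filter (\<lambda>i. i \<in> J) [0..<n])" "distinct (filter (\<lambda>i. i \<in> J) [0..<n])"
    by (auto intro: sorted_wrt_filter)
  ultimately show ?thesis
    by (metis sorted_list_of_set_sort_remdups distinct_remdups_id sorted_sort_id)
qed

context opt begin

lemma coarse_sub:
  assumes Cs: "Cs \<in> Tests T A B" and J: "J \<subseteq> {..<length Cs}" "J \<noteq> {}"
  shows "\<exists>\<sigma>. issum A B \<sigma> (nth Cs) J"
proof (cases "J = {..<length Cs}")
  case True
  obtain Ds where Ds: "Ds \<in> Tests T A B" "length Ds = 1"
    "is_sum T A B (Ds ! 0) (map (nth Cs) (filter (\<lambda>i. (0::nat) = 0) [0..<length Cs]))"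
    using coarse_test[OF Cs, of "\<lambda>_. 0" 1] J by auto
  have "filter (\<lambda>i. (0::nat) = 0) [0..<length Cs] = sorted_list_of_set J"
    using filter_sorted_set[of J "length Cs"] True by simp
  then show ?thesis using Ds(3) is_sum_issum[of J] J finite_subset by (metis finite_lessThan)
next
  case False
  then obtain i1 where i1: "i1 < length Cs" "i1 \<notin> J" using J by auto
  obtain i0 where i0: "i0 \<in> J" using J by auto
  define f where "f = (\<lambda>i. if i \<in> J then (0::nat) else 1)"
  obtain Ds where Ds: "Ds \<in> Tests T A B" "length Ds = 2"
    "\<forall>j<2. is_sum T A B (Ds ! j) (map (nth Cs) (filter (\<lambda>i. f i = j) [0..<length Cs]))"
  proof -
    have "\<forall>j<2. \<exists>i<length Cs. f i = j"
    proof (intro allI impI)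
      fix j :: nat assume "j < 2"
      then consider "j = 0" | "j = 1" by linarith
      then show "\<exists>i<length Cs. f i = j"
        by cases (use i0 i1 J in \<open>auto simp: f_def\<close>)
    qed
    moreover have "\<forall>i<length Cs. f i < 2" by (simp add: f_def)
    ultimately show ?thesis using coarse_test[OF Cs, of f 2] that by blast
  qed
  have "filter (\<lambda>i. f i = 0) [0..<length Cs] = sorted_list_of_set J"
    using filter_sorted_set[OF J(1)] by (simp add: f_def)
  then show ?thesis using Ds(3) is_sum_issum[of J] J finite_subset by (metis finite_lessThan zero_less_numeral)
qed

lemma F1:
  assumes X: "X \<in> Tr T II A" and r: "r \<in> Tr T II K" and a: "a \<in> Tr T A II" and c: "c \<in> Tr T K II"
  shows "prb T ((a \<otimes>\<^sub>T c) \<circ>\<^sub>T ((ID A \<otimes>\<^sub>T r) \<circ>\<^sub>T X)) = prb T (a \<circ>\<^sub>T X) * prb T (c \<circ>\<^sub>T r)"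
proof -
  have Ir: "ID A \<otimes>\<^sub>T r \<in> Tr T A (sc T A K)" using parc_Tr[OF idt_Tr r, of A] by simp
  have ac: "a \<otimes>\<^sub>T c \<in> Tr T (sc T A K) II" using parc_Tr[OF a c] by simp
  have p: "c \<circ>\<^sub>T r \<in> Tr T II II" using r c by auto
  have "(a \<otimes>\<^sub>T c) \<circ>\<^sub>T (ID A \<otimes>\<^sub>T r) = a \<otimes>\<^sub>T (c \<circ>\<^sub>T r)"
    using interchange[OF idt_Tr a r c] seqc_id_r[OF a] by simp
  also have "\<dots> = a \<circ>\<^sub>T (ID A \<otimes>\<^sub>T (c \<circ>\<^sub>T r))" using eff_split_l[OF a p] .
  finally have e1: "(a \<otimes>\<^sub>T c) \<circ>\<^sub>T (ID A \<otimes>\<^sub>T r) = a \<circ>\<^sub>T (ID A \<otimes>\<^sub>T (c \<circ>\<^sub>T r))" .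
  have Ip: "ID A \<otimes>\<^sub>T (c \<circ>\<^sub>T r) \<in> Tr T A A" using parc_Tr[OF idt_Tr p, of A] by simp
  have e2: "(ID A \<otimes>\<^sub>T (c \<circ>\<^sub>T r)) \<circ>\<^sub>T X = X \<circ>\<^sub>T (c \<circ>\<^sub>T r)"
    using ic_split2[OF X p] state_scalar[OF X p] X by simp
  have "(a \<otimes>\<^sub>T c) \<circ>\<^sub>T ((ID A \<otimes>\<^sub>T r) \<circ>\<^sub>T X) = ((a \<otimes>\<^sub>T c) \<circ>\<^sub>T (ID A \<otimes>\<^sub>T r)) \<circ>\<^sub>T X"
    using assoc3[OF X Ir ac] .
  also have "\<dots> = (a \<circ>\<^sub>T (ID A \<otimes>\<^sub>T (c \<circ>\<^sub>T r))) \<circ>\<^sub>T X" using e1 by simp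
  also have "\<dots> = a \<circ>\<^sub>T (X \<circ>\<^sub>T (c \<circ>\<^sub>T r))" using assoc3[OF X Ip a] e2 by simp
  finally show ?thesis using prb_scal[OF X p a] by simp
qed

lemma sigma_constr:
  assumes Ds: "Ds \<in> Tests T II A" and Y0: "Y0 \<subseteq> {..<length Ds}" and i0: "i0 \<in> Y0"
    and r0: "\<rho>0 \<in> Tr T II K" and r1: "\<rho>1 \<in> Tr T II K"
  shows "\<exists>\<sigma>\<in>Tr T II (sc T A K). \<forall>a\<in>Tr T (sc T A K) II.
     prb T (a \<circ>\<^sub>T \<sigma>) = (\<Sum>i\<in>Y0. prb T (a \<circ>\<^sub>T ((ID A \<otimes>\<^sub>T (if i = i0 then \<rho>0 else \<rho>1)) \<circ>\<^sub>T Ds!i)))"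
proof -
  obtain Ps0 where Ps0: "Ps0 \<in> Tests T II K" "\<rho>0 \<in> set Ps0" using Tr_in_test[OF r0] by blast
  obtain Ps1 where Ps1: "Ps1 \<in> Tests T II K" "\<rho>1 \<in> set Ps1" using Tr_in_test[OF r1] by blast
  obtain q0 where q0: "q0 < length Ps0" "Ps0 ! q0 = \<rho>0" using Ps0(2) by (metis in_set_conv_nth)
  obtain q1 where q1: "q1 < length Ps1" "Ps1 ! q1 = \<rho>1" using Ps1(2) by (metis in_set_conv_nth)
  define n where "n = length Ds"
  define Qs where "Qs = (\<lambda>i. map (parc T (ID A)) (if i = i0 then Ps0 else Ps1))"
  have Qs: "Qs i \<in> Tests T A (sc T A K)" for i
    unfolding Qs_def using par_test_left[OF Ps0(1), of A] par_test_left[OF Ps1(1), of A] by simp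
  define Ls where "Ls = map (\<lambda>i. map (\<lambda>d. d \<circ>\<^sub>T Ds!i) (Qs i)) [0..<n]"
  have Big: "concat Ls \<in> Tests T II (sc T A K)"
  proof -
    have "concat (map (\<lambda>i. map (\<lambda>d. d \<circ>\<^sub>T (Ds ! i)) (map Qs [0..<n] ! i)) [0..<length Ds]) \<in> Tests T II (sc T A K)"
      by (rule cond_test[OF Ds]) (auto simp: n_def Qs)
    moreover have "map (\<lambda>i. map (\<lambda>d. d \<circ>\<^sub>T (Ds ! i)) (map Qs [0..<n] ! i)) [0..<length Ds] = Ls"
      unfolding Ls_def n_def by (rule map_cong) auto
    ultimately show ?thesis by simp
  qed
  define qs where "qs = (\<lambda>i. if i = i0 then q0 else q1)"
  define rs where "rs = (\<lambda>i. if i = i0 then \<rho>0 else \<rho>1)"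
  define pos where "pos = (\<lambda>i. length (concat (take i Ls)) + qs i)"
  have lenLs: "length Ls = n" by (simp add: Ls_def)
  have qsl: "qs i < length (Ls!i)" if "i < n" for i
    using that q0 q1 by (simp add: Ls_def qs_def Qs_def)
  have posB: "pos i < length (concat Ls) \<and> concat Ls ! pos i = (ID A \<otimes>\<^sub>T rs i) \<circ>\<^sub>T Ds!i" if "i < n" for i
  proof -
    have "Ls ! i ! qs i = (ID A \<otimes>\<^sub>T rs i) \<circ>\<^sub>T Ds!i"
      using that q0 q1 by (simp add: Ls_def qs_def Qs_def rs_def)
    then show ?thesis using concat_pos[of i Ls "qs i"] that lenLs qsl[OF that] by (simp add: pos_def)
  qed
  have inj: "inj_on pos Y0"
  proof (rule inj_onI)
    fix i i' assume "i \<in> Y0" "i' \<in> Y0" "pos i = pos i'"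
    then show "i = i'" using concat_pos_inj[of i Ls "qs i" i' "qs i'"] Y0 lenLs qsl
      by (auto simp: pos_def n_def)
  qed
  have Jsub: "pos ` Y0 \<subseteq> {..<length (concat Ls)}" using posB Y0 by (auto simp: n_def)
  obtain \<sigma> where s: "issum II (sc T A K) \<sigma> (nth (concat Ls)) (pos ` Y0)"
    using coarse_sub[OF Big Jsub] i0 by blast
  have fin: "finite (pos ` Y0)" using s by (simp add: issum_def)
  have sT: "\<sigma> \<in> Tr T II (sc T A K)" using s by (simp add: issum_def)
  have elT: "\<And>j. j \<in> pos ` Y0 \<Longrightarrow> concat Ls ! j \<in> Tr T II (sc T A K)" using s unfolding issum_def by blast
  have "\<forall>a\<in>Tr T (sc T A K) II. prb T (a \<circ>\<^sub>T \<sigma>) = (\<Sum>j\<in>pos ` Y0. prb T (a \<circ>\<^sub>T (concat Ls ! j)))"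
    using issum_state_iff[where Ds="nth (concat Ls)", OF fin sT elT] s by blast
  moreover have "(\<Sum>j\<in>pos ` Y0. prb T (a \<circ>\<^sub>T (concat Ls ! j))) = (\<Sum>i\<in>Y0. prb T (a \<circ>\<^sub>T ((ID A \<otimes>\<^sub>T rs i) \<circ>\<^sub>T Ds!i)))" for a
  proof -
    have "(\<Sum>j\<in>pos ` Y0. prb T (a \<circ>\<^sub>T (concat Ls ! j))) = (\<Sum>i\<in>Y0. prb T (a \<circ>\<^sub>T (concat Ls ! pos i)))"
      by (rule sum.reindex[OF inj, unfolded comp_def])
    also have "\<dots> = (\<Sum>i\<in>Y0. prb T (a \<circ>\<^sub>T ((ID A \<otimes>\<^sub>T rs i) \<circ>\<^sub>T Ds!i)))"
    proof (rule sum.cong)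
      fix i assume "i \<in> Y0"
      then have "i < n" using Y0 by (auto simp: n_def)
      then show "prb T (a \<circ>\<^sub>T (concat Ls ! pos i)) = prb T (a \<circ>\<^sub>T ((ID A \<otimes>\<^sub>T rs i) \<circ>\<^sub>T Ds!i))"
        using posB by simp
    qed simp
    finally show ?thesis .
  qed
  ultimately show ?thesis using sT unfolding rs_def by auto
qed

end

context opt begin

lemma St1I: "\<sigma> \<in> Tr T II X \<Longrightarrow> prb T (E X \<circ>\<^sub>T \<sigma>) = 1 \<Longrightarrow> \<sigma> \<in> St1 T X"
  unfolding St1_def normalized_def St_def by simp

lemma prod_St1: "\<Psi> \<in> St1 T X \<Longrightarrow> \<Phi> \<in> St1 T Y \<Longrightarrow> \<Psi> \<otimes>\<^sub>T \<Phi> \<in> St1 T (sc T X Y)"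
proof -
  assume a: "\<Psi> \<in> St1 T X" "\<Phi> \<in> St1 T Y"
  have P: "\<Psi> \<in> Tr T II X" "\<Phi> \<in> Tr T II Y" using a St1_Tr by auto
  have "E (sc T X Y) \<circ>\<^sub>T (\<Psi> \<otimes>\<^sub>T \<Phi>) = (E X \<circ>\<^sub>T \<Psi>) \<otimes>\<^sub>T (E Y \<circ>\<^sub>T \<Phi>)"
    using causal_par[of X Y] ic_states[OF det_Tr det_Tr P] by simp
  also have "\<dots> = ID II" using norm_det[OF a(1)] norm_det[OF a(2)] par_idI_l[OF idt_Tr[of II]] by simp
  finally show ?thesis using parc_Tr[OF P] by (intro St1I) simp_all
qed

lemma marg_Tr: "\<Psi> \<in> Tr T II (sc T A C) \<Longrightarrow> marginal T A C \<Psi> \<in> Tr T II A"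
  unfolding marginal_def by (auto intro!: TrR)

lemma marg_St1: "\<Psi> \<in> St1 T (sc T A C) \<Longrightarrow> marginal T A C \<Psi> \<in> St1 T A"
proof -
  assume a: "\<Psi> \<in> St1 T (sc T A C)"
  have P: "\<Psi> \<in> Tr T II (sc T A C)" using a St1_Tr by auto
  have Ie: "ID A \<otimes>\<^sub>T E C \<in> Tr T (sc T A C) A" by (auto intro!: TrR)
  have "E A \<circ>\<^sub>T marginal T A C \<Psi> = (E A \<circ>\<^sub>T (ID A \<otimes>\<^sub>T E C)) \<circ>\<^sub>T \<Psi>"
    unfolding marginal_def using assoc3[OF P Ie det_Tr] .
  also have "\<dots> = E (sc T A C) \<circ>\<^sub>T \<Psi>" using eff_split_l[OF det_Tr det_Tr, of A C] causal_par[of A C] by simp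
  finally show ?thesis using norm_det[OF a] marg_Tr[OF P] by (intro St1I) simp_all
qed

lemma state_eq: "\<rho> \<in> Tr T II X \<Longrightarrow> \<sigma> \<in> Tr T II X \<Longrightarrow> (\<forall>a\<in>Tr T X II. prb T (a \<circ>\<^sub>T \<rho>) = prb T (a \<circ>\<^sub>T \<sigma>)) \<Longrightarrow> \<rho> = \<sigma>"
  using state_ident unfolding St_def Eff_def by blast

end

context purif_opt begin

lemma phi_part:
  assumes Ps1: "\<Psi> \<in> St1 T (sc T A C)" and R: "refines T II A D (marginal T A C \<Psi>)"
  shows "\<exists>Z' \<Phi> g. \<Phi> \<in> St1 T (sc T A Z') \<and> pure_state T (sc T A Z') \<Phi> \<and>
           marginal T A Z' \<Phi> = marginal T A C \<Psi> \<and> g \<in> Tr T Z' II \<and> (ID A \<otimes>\<^sub>T g) \<circ>\<^sub>T \<Phi> = D"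
proof -
  define \<omega> where "\<omega> = marginal T A C \<Psi>"
  have P: "\<Psi> \<in> Tr T II (sc T A C)" using Ps1 St1_Tr by auto
  have \<omega>1: "\<omega> \<in> St1 T A" using marg_St1[OF Ps1] by (simp add: \<omega>_def)
  have \<omega>T: "\<omega> \<in> Tr T II A" using St1_Tr[OF \<omega>1] .
  obtain Ds Y0 i0 where Ds: "Ds \<in> Tests T II A" and Y0: "Y0 \<subseteq> {..<length Ds}"
      and s: "issum II A \<omega> (nth Ds) Y0" and i0: "i0 \<in> Y0" and Di: "D = Ds ! i0"
    using R unfolding refines_iff \<omega>_def by blast
  have fY: "finite Y0" using s by (simp add: issum_def)
  have DsT: "\<And>i. i \<in> Y0 \<Longrightarrow> Ds ! i \<in> Tr T II A" using s by (simp add: issum_def)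
  have \<omega>eq: "\<forall>a\<in>Tr T A II. prb T (a \<circ>\<^sub>T \<omega>) = (\<Sum>i\<in>Y0. prb T (a \<circ>\<^sub>T Ds!i))"
    using issum_state_iff[where Ds="nth Ds", OF fY \<omega>T DsT] s by blast
  obtain K \<rho>0 \<rho>1 a0 a1 where r0: "\<rho>0 \<in> St1 T K" and r1: "\<rho>1 \<in> St1 T K"
     and aa: "[a0, a1] \<in> Tests T K II" and p00: "prb T (a0 \<circ>\<^sub>T \<rho>0) = 1" and p01: "prb T (a0 \<circ>\<^sub>T \<rho>1) = 0"
    using perf_dist by blast
  have r0T: "\<rho>0 \<in> Tr T II K" and r1T: "\<rho>1 \<in> Tr T II K" using r0 r1 St1_Tr by auto
  have a0T: "a0 \<in> Tr T K II" using Tests_Tr[OF aa] by simp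
  define rs where "rs = (\<lambda>i. if i = i0 then \<rho>0 else \<rho>1)"
  have rsT: "rs i \<in> Tr T II K" for i using r0T r1T by (simp add: rs_def)
  obtain \<sigma> where \<sigma>T: "\<sigma> \<in> Tr T II (sc T A K)" and \<sigma>eq: "\<forall>a\<in>Tr T (sc T A K) II.
     prb T (a \<circ>\<^sub>T \<sigma>) = (\<Sum>i\<in>Y0. prb T (a \<circ>\<^sub>T ((ID A \<otimes>\<^sub>T rs i) \<circ>\<^sub>T Ds!i)))"
    using sigma_constr[OF Ds Y0 i0 r0T r1T] unfolding rs_def by blast
  have key: "prb T ((a \<otimes>\<^sub>T c) \<circ>\<^sub>T \<sigma>) = (\<Sum>i\<in>Y0. prb T (a \<circ>\<^sub>T Ds!i) * prb T (c \<circ>\<^sub>T rs i))"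
    if a: "a \<in> Tr T A II" and c: "c \<in> Tr T K II" for a c
  proof -
    have "a \<otimes>\<^sub>T c \<in> Tr T (sc T A K) II" using parc_Tr[OF a c] by simp
    then have "prb T ((a \<otimes>\<^sub>T c) \<circ>\<^sub>T \<sigma>) = (\<Sum>i\<in>Y0. prb T ((a \<otimes>\<^sub>T c) \<circ>\<^sub>T ((ID A \<otimes>\<^sub>T rs i) \<circ>\<^sub>T Ds!i)))"
      using \<sigma>eq by blast
    also have "\<dots> = (\<Sum>i\<in>Y0. prb T (a \<circ>\<^sub>T Ds!i) * prb T (c \<circ>\<^sub>T rs i))"
      using F1[OF DsT rsT a c] by simp
    finally show ?thesis .
  qed
  have rsE: "prb T (E K \<circ>\<^sub>T rs i) = 1" for i using r0 r1 prb_det1 by (simp add: rs_def)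
  have marg_sum: "(\<Sum>i\<in>Y0. prb T (a \<circ>\<^sub>T Ds!i) * prb T (E K \<circ>\<^sub>T rs i)) = prb T (a \<circ>\<^sub>T \<omega>)"
    if a: "a \<in> Tr T A II" for a
    using rsE \<omega>eq a by simp
  have \<sigma>1: "\<sigma> \<in> St1 T (sc T A K)"
  proof (rule St1I[OF \<sigma>T])
    have "prb T (E (sc T A K) \<circ>\<^sub>T \<sigma>) = prb T ((E A \<otimes>\<^sub>T E K) \<circ>\<^sub>T \<sigma>)" using causal_par[of A K] by simp
    also have "\<dots> = prb T (E A \<circ>\<^sub>T \<omega>)" using key[OF det_Tr det_Tr] marg_sum[OF det_Tr] by simp
    also have "\<dots> = 1" using prb_det1[OF \<omega>1] .
    finally show "prb T (E (sc T A K) \<circ>\<^sub>T \<sigma>) = 1" .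
  qed
  obtain B' \<Phi> where \<Phi>1': "\<Phi> \<in> St1 T (sc T (sc T A K) B')" and p\<Phi>': "pure_state T (sc T (sc T A K) B') \<Phi>"
      and m\<Phi>: "marginal T (sc T A K) B' \<Phi> = \<sigma>"
    using purif_exists[OF \<sigma>1] by blast
  have \<Phi>1: "\<Phi> \<in> St1 T (sc T A (sc T K B'))" and p\<Phi>: "pure_state T (sc T A (sc T K B')) \<Phi>"
    using \<Phi>1' p\<Phi>' by simp_all
  have \<Phi>T: "\<Phi> \<in> Tr T II (sc T A (sc T K B'))" using St1_Tr[OF \<Phi>1] .
  have key\<Phi>: "prb T (a \<circ>\<^sub>T ((ID A \<otimes>\<^sub>T (c \<otimes>\<^sub>T E B')) \<circ>\<^sub>T \<Phi>)) = prb T ((a \<otimes>\<^sub>T c) \<circ>\<^sub>T \<sigma>)"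
    if a: "a \<in> Tr T A II" and c: "c \<in> Tr T K II" for a c
  proof -
    have cE: "c \<otimes>\<^sub>T E B' \<in> Tr T (sc T K B') II" using parc_Tr[OF c det_Tr] by simp
    have ac: "a \<otimes>\<^sub>T c \<in> Tr T (sc T A K) II" using parc_Tr[OF a c] by simp
    have IcE: "ID A \<otimes>\<^sub>T (c \<otimes>\<^sub>T E B') \<in> Tr T (sc T A (sc T K B')) A" by (auto intro!: TrR c)
    have IE: "ID (sc T A K) \<otimes>\<^sub>T E B' \<in> Tr T (sc T A (sc T K B')) (sc T A K)" by (auto intro!: TrR)
    have "a \<circ>\<^sub>T (ID A \<otimes>\<^sub>T (c \<otimes>\<^sub>T E B')) = a \<otimes>\<^sub>T (c \<otimes>\<^sub>T E B')" using eff_split_l[OF a cE] by simp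
    also have "\<dots> = (a \<otimes>\<^sub>T c) \<otimes>\<^sub>T E B'" using parc_assoc[OF a c det_Tr] by simp
    also have "\<dots> = (a \<otimes>\<^sub>T c) \<circ>\<^sub>T (ID (sc T A K) \<otimes>\<^sub>T E B')" using eff_split_l[OF ac det_Tr] .
    finally have e: "a \<circ>\<^sub>T (ID A \<otimes>\<^sub>T (c \<otimes>\<^sub>T E B')) = (a \<otimes>\<^sub>T c) \<circ>\<^sub>T (ID (sc T A K) \<otimes>\<^sub>T E B')" .
    have "a \<circ>\<^sub>T ((ID A \<otimes>\<^sub>T (c \<otimes>\<^sub>T E B')) \<circ>\<^sub>T \<Phi>) = (a \<circ>\<^sub>T (ID A \<otimes>\<^sub>T (c \<otimes>\<^sub>T E B'))) \<circ>\<^sub>T \<Phi>"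
      using assoc3[OF \<Phi>T IcE a] .
    also have "\<dots> = (a \<otimes>\<^sub>T c) \<circ>\<^sub>T ((ID (sc T A K) \<otimes>\<^sub>T E B') \<circ>\<^sub>T \<Phi>)"
      using e assoc3[OF \<Phi>T IE ac] by simp
    also have "\<dots> = (a \<otimes>\<^sub>T c) \<circ>\<^sub>T \<sigma>" using m\<Phi> unfolding marginal_def by simp
    finally show ?thesis by simp
  qed
  have gT: "a0 \<otimes>\<^sub>T E B' \<in> Tr T (sc T K B') II" using parc_Tr[OF a0T det_Tr] by simp
  have \<Phi>D: "(ID A \<otimes>\<^sub>T (a0 \<otimes>\<^sub>T E B')) \<circ>\<^sub>T \<Phi> = D"
  proof (rule state_eq)
    show "(ID A \<otimes>\<^sub>T (a0 \<otimes>\<^sub>T E B')) \<circ>\<^sub>T \<Phi> \<in> Tr T II A" using \<Phi>T gT by (auto intro!: TrR a0T)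
    show "D \<in> Tr T II A" using DsT[OF i0] Di by simp
    show "\<forall>a\<in>Tr T A II. prb T (a \<circ>\<^sub>T ((ID A \<otimes>\<^sub>T (a0 \<otimes>\<^sub>T E B')) \<circ>\<^sub>T \<Phi>)) = prb T (a \<circ>\<^sub>T D)"
    proof
      fix a assume a: "a \<in> Tr T A II"
      have pr: "prb T (a0 \<circ>\<^sub>T rs i) = (if i = i0 then 1 else 0)" for i using p00 p01 by (simp add: rs_def)
      have "prb T (a \<circ>\<^sub>T ((ID A \<otimes>\<^sub>T (a0 \<otimes>\<^sub>T E B')) \<circ>\<^sub>T \<Phi>)) = (\<Sum>i\<in>Y0. prb T (a \<circ>\<^sub>T Ds!i) * prb T (a0 \<circ>\<^sub>T rs i))"
        using key\<Phi>[OF a a0T] key[OF a a0T] by simp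
      also have "\<dots> = (\<Sum>i\<in>Y0. if i = i0 then prb T (a \<circ>\<^sub>T Ds!i) else 0)"
        by (rule sum.cong) (auto simp: pr)
      also have "\<dots> = prb T (a \<circ>\<^sub>T D)" using fY i0 Di by (simp add: sum.delta)
      finally show "prb T (a \<circ>\<^sub>T ((ID A \<otimes>\<^sub>T (a0 \<otimes>\<^sub>T E B')) \<circ>\<^sub>T \<Phi>)) = prb T (a \<circ>\<^sub>T D)" .
    qed
  qed
  have \<Phi>\<omega>: "marginal T A (sc T K B') \<Phi> = \<omega>"
  proof (rule state_eq)
    show "marginal T A (sc T K B') \<Phi> \<in> Tr T II A" using marg_Tr \<Phi>T by blast
    show "\<omega> \<in> Tr T II A" using \<omega>T .
    show "\<forall>a\<in>Tr T A II. prb T (a \<circ>\<^sub>T marginal T A (sc T K B') \<Phi>) = prb T (a \<circ>\<^sub>T \<omega>)"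
    proof
      fix a assume a: "a \<in> Tr T A II"
      have "marginal T A (sc T K B') \<Phi> = (ID A \<otimes>\<^sub>T (E K \<otimes>\<^sub>T E B')) \<circ>\<^sub>T \<Phi>"
        unfolding marginal_def using causal_par[of K B'] by simp
      then show "prb T (a \<circ>\<^sub>T marginal T A (sc T K B') \<Phi>) = prb T (a \<circ>\<^sub>T \<omega>)"
        using key\<Phi>[OF a det_Tr] key[OF a det_Tr] marg_sum[OF a] by simp
    qed
  qed
  show ?thesis using \<Phi>1 p\<Phi> \<Phi>\<omega> gT \<Phi>D unfolding \<omega>_def by blast
qed

end

context opt begin

lemma perm_facts:
  fixes A C Z' :: 's
  defines "\<pi> \<equiv> (swp T A C \<otimes>\<^sub>T ID Z') \<circ>\<^sub>T swp T Z' (sc T A C)"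
    and "\<pi>' \<equiv> swp T (sc T A C) Z' \<circ>\<^sub>T (swp T C A \<otimes>\<^sub>T ID Z')"
  shows "\<pi> \<in> Tr T (sc T Z' (sc T A C)) (sc T C (sc T A Z'))"
    and "\<pi>' \<in> Tr T (sc T C (sc T A Z')) (sc T Z' (sc T A C))"
    and "\<pi>' \<circ>\<^sub>T \<pi> = ID (sc T Z' (sc T A C))"
    and "\<pi> \<circ>\<^sub>T \<pi>' = ID (sc T C (sc T A Z'))"
    and "E (sc T C (sc T A Z')) \<circ>\<^sub>T \<pi> = E (sc T Z' (sc T A C))"
proof -
  have s1: "swp T Z' (sc T A C) \<in> Tr T (sc T Z' (sc T A C)) (sc T A (sc T C Z'))" by (auto intro!: TrR)
  have t1: "swp T A C \<otimes>\<^sub>T ID Z' \<in> Tr T (sc T A (sc T C Z')) (sc T C (sc T A Z'))" by (auto intro!: TrR)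
  have t2: "swp T C A \<otimes>\<^sub>T ID Z' \<in> Tr T (sc T C (sc T A Z')) (sc T A (sc T C Z'))" by (auto intro!: TrR)
  have s2: "swp T (sc T A C) Z' \<in> Tr T (sc T A (sc T C Z')) (sc T Z' (sc T A C))" by (auto intro!: TrR)
  have sAC: "swp T A C \<in> Tr T (sc T A C) (sc T C A)" and sCA: "swp T C A \<in> Tr T (sc T C A) (sc T A C)"
    using swp_Tr by auto
  have t2t1: "(swp T C A \<otimes>\<^sub>T ID Z') \<circ>\<^sub>T (swp T A C \<otimes>\<^sub>T ID Z') = ID (sc T A (sc T C Z'))"
    using ic_left[OF sAC sCA, of Z'] swp_inv[of C A] parc_id[of "sc T A C" Z'] by simp
  have t1t2: "(swp T A C \<otimes>\<^sub>T ID Z') \<circ>\<^sub>T (swp T C A \<otimes>\<^sub>T ID Z') = ID (sc T C (sc T A Z'))"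
    using ic_left[OF sCA sAC, of Z'] swp_inv[of A C] parc_id[of "sc T C A" Z'] by simp
  have s2s1: "swp T (sc T A C) Z' \<circ>\<^sub>T swp T Z' (sc T A C) = ID (sc T Z' (sc T A C))"
    using swp_inv[of "sc T A C" Z'] by simp
  have s1s2: "swp T Z' (sc T A C) \<circ>\<^sub>T swp T (sc T A C) Z' = ID (sc T A (sc T C Z'))"
    using swp_inv[of Z' "sc T A C"] by simp
  show "\<pi> \<in> Tr T (sc T Z' (sc T A C)) (sc T C (sc T A Z'))" unfolding \<pi>_def using s1 t1 by auto
  show "\<pi>' \<in> Tr T (sc T C (sc T A Z')) (sc T Z' (sc T A C))" unfolding \<pi>'_def using s2 t2 by auto
  have "\<pi>' \<circ>\<^sub>T \<pi> = swp T (sc T A C) Z' \<circ>\<^sub>T ((swp T C A \<otimes>\<^sub>T ID Z') \<circ>\<^sub>T ((swp T A C \<otimes>\<^sub>T ID Z') \<circ>\<^sub>T swp T Z' (sc T A C)))"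
    unfolding \<pi>_def \<pi>'_def using seqc_assoc'[OF Tr_seq[OF s1 t1] t2 s2] by simp
  also have "\<dots> = swp T (sc T A C) Z' \<circ>\<^sub>T (((swp T C A \<otimes>\<^sub>T ID Z') \<circ>\<^sub>T (swp T A C \<otimes>\<^sub>T ID Z')) \<circ>\<^sub>T swp T Z' (sc T A C))"
    using assoc3[OF s1 t1 t2] by simp
  also have "\<dots> = ID (sc T Z' (sc T A C))" using t2t1 seqc_id_l[OF s1] s2s1 by simp
  finally show "\<pi>' \<circ>\<^sub>T \<pi> = ID (sc T Z' (sc T A C))" .
  have "\<pi> \<circ>\<^sub>T \<pi>' = (swp T A C \<otimes>\<^sub>T ID Z') \<circ>\<^sub>T (swp T Z' (sc T A C) \<circ>\<^sub>T (swp T (sc T A C) Z' \<circ>\<^sub>T (swp T C A \<otimes>\<^sub>T ID Z')))"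
    unfolding \<pi>_def \<pi>'_def using seqc_assoc'[OF Tr_seq[OF t2 s2] s1 t1] by simp
  also have "\<dots> = (swp T A C \<otimes>\<^sub>T ID Z') \<circ>\<^sub>T ((swp T Z' (sc T A C) \<circ>\<^sub>T swp T (sc T A C) Z') \<circ>\<^sub>T (swp T C A \<otimes>\<^sub>T ID Z'))"
    using assoc3[OF t2 s2 s1] by simp
  also have "\<dots> = ID (sc T C (sc T A Z'))" using s1s2 seqc_id_l[OF t2] t1t2 by simp
  finally show "\<pi> \<circ>\<^sub>T \<pi>' = ID (sc T C (sc T A Z'))" .
  have eCA: "E (sc T C (sc T A Z')) = E (sc T C A) \<otimes>\<^sub>T E Z'" using causal_par[of "sc T C A" Z'] by simp
  have eAC: "E (sc T A (sc T C Z')) = E (sc T A C) \<otimes>\<^sub>T E Z'" using causal_par[of "sc T A C" Z'] by simp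
  have "E (sc T C (sc T A Z')) \<circ>\<^sub>T (swp T A C \<otimes>\<^sub>T ID Z') = (E (sc T C A) \<circ>\<^sub>T swp T A C) \<otimes>\<^sub>T (E Z' \<circ>\<^sub>T ID Z')"
    using eCA interchange[OF sAC det_Tr idt_Tr det_Tr] by simp
  also have "\<dots> = E (sc T A (sc T C Z'))" using det_swp[of C A] seqc_id_r[OF det_Tr] eAC by simp
  finally have e1: "E (sc T C (sc T A Z')) \<circ>\<^sub>T (swp T A C \<otimes>\<^sub>T ID Z') = E (sc T A (sc T C Z'))" .
  have "E (sc T C (sc T A Z')) \<circ>\<^sub>T \<pi> = (E (sc T C (sc T A Z')) \<circ>\<^sub>T (swp T A C \<otimes>\<^sub>T ID Z')) \<circ>\<^sub>T swp T Z' (sc T A C)"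
    unfolding \<pi>_def using assoc3[OF s1 t1 det_Tr] .
  also have "\<dots> = E (sc T Z' (sc T A C))" using e1 det_swp[of "sc T A C" Z'] by simp
  finally show "E (sc T C (sc T A Z')) \<circ>\<^sub>T \<pi> = E (sc T Z' (sc T A C))" .
qed

end

context purif_opt begin

lemma transfer:
  assumes Ps1: "\<Psi> \<in> St1 T (sc T A C)" and pP: "pure_state T (sc T A C) \<Psi>"
    and Ph1: "\<Phi> \<in> St1 T (sc T A Z')" and pF: "pure_state T (sc T A Z') \<Phi>"
    and mm: "marginal T A Z' \<Phi> = marginal T A C \<Psi>" and g: "g \<in> Tr T Z' II"
  shows "\<exists>b\<in>Tr T C II. (ID A \<otimes>\<^sub>T g) \<circ>\<^sub>T \<Phi> = (ID A \<otimes>\<^sub>T b) \<circ>\<^sub>T \<Psi>"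
proof -
  define \<omega> where "\<omega> = marginal T A C \<Psi>"
  define W where "W = sc T A Z'"
  define Z where "Z = sc T C W"
  define Z2 where "Z2 = sc T Z' (sc T A C)"
  define \<pi> where "\<pi> = (swp T A C \<otimes>\<^sub>T ID Z') \<circ>\<^sub>T swp T Z' (sc T A C)"
  define \<pi>' where "\<pi>' = swp T (sc T A C) Z' \<circ>\<^sub>T (swp T C A \<otimes>\<^sub>T ID Z')"
  have \<pi>T: "\<pi> \<in> Tr T Z2 Z" and \<pi>'T: "\<pi>' \<in> Tr T Z Z2" and \<pi>'\<pi>: "\<pi>' \<circ>\<^sub>T \<pi> = ID Z2"
    and \<pi>\<pi>': "\<pi> \<circ>\<^sub>T \<pi>' = ID Z" and E\<pi>: "E Z \<circ>\<^sub>T \<pi> = E Z2"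
    using perm_facts(1)[where A=A and C=C and Z'=Z'] perm_facts(2)[where A=A and C=C and Z'=Z'] perm_facts(3)[where A=A and C=C and Z'=Z'] perm_facts(4)[where A=A and C=C and Z'=Z'] perm_facts(5)[where A=A and C=C and Z'=Z']
    unfolding \<pi>_def \<pi>'_def Z_def Z2_def W_def by (simp_all only: sc_assoc)
  have P: "\<Psi> \<in> Tr T II (sc T A C)" using Ps1 St1_Tr by auto
  have F: "\<Phi> \<in> Tr T II W" using Ph1 St1_Tr W_def by auto
  have \<omega>T: "\<omega> \<in> Tr T II A" using marg_Tr[OF P] \<omega>_def by simp
  have IEC: "ID A \<otimes>\<^sub>T E C \<in> Tr T (sc T A C) A" by (auto intro!: TrR)
  have IEZ': "ID A \<otimes>\<^sub>T E Z' \<in> Tr T W A" unfolding W_def by (auto intro!: TrR)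
  define \<sigma>1 where "\<sigma>1 = \<Psi> \<otimes>\<^sub>T \<Phi>"
  have \<sigma>1: "\<sigma>1 \<in> St1 T (sc T A Z)" using prod_St1[OF Ps1 Ph1] unfolding \<sigma>1_def Z_def W_def by simp
  have p\<sigma>1: "pure_state T (sc T A Z) \<sigma>1" using pure_prod[OF Ps1 pP Ph1 pF] unfolding \<sigma>1_def Z_def W_def by simp
  have m1: "marginal T A Z \<sigma>1 = \<omega>"
  proof -
    have "ID A \<otimes>\<^sub>T E Z = (ID A \<otimes>\<^sub>T E C) \<otimes>\<^sub>T E W"
      unfolding Z_def using causal_par[of C W] parc_assoc[OF idt_Tr det_Tr det_Tr, of A C W] by simp
    then have "marginal T A Z \<sigma>1 = ((ID A \<otimes>\<^sub>T E C) \<circ>\<^sub>T \<Psi>) \<otimes>\<^sub>T (E W \<circ>\<^sub>T \<Phi>)"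
      unfolding marginal_def \<sigma>1_def using ic_states[OF IEC det_Tr P F] by simp
    also have "\<dots> = \<omega>" using norm_det[OF Ph1] \<omega>T unfolding \<omega>_def marginal_def W_def by simp
    finally show ?thesis .
  qed
  define \<sigma>2 where "\<sigma>2 = \<Phi> \<otimes>\<^sub>T \<Psi>"
  have \<sigma>2: "\<sigma>2 \<in> St1 T (sc T A Z2)" using prod_St1[OF Ph1 Ps1] unfolding \<sigma>2_def Z2_def by simp
  have p\<sigma>2: "pure_state T (sc T A Z2) \<sigma>2" using pure_prod[OF Ph1 pF Ps1 pP] unfolding \<sigma>2_def Z2_def by simp
  have \<sigma>2T: "\<sigma>2 \<in> Tr T II (sc T A Z2)" using St1_Tr[OF \<sigma>2] .
  define G where "G = ID A \<otimes>\<^sub>T \<pi>"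
  define H where "H = ID A \<otimes>\<^sub>T \<pi>'"
  have GT: "G \<in> Tr T (sc T A Z2) (sc T A Z)" unfolding G_def using parc_Tr[OF idt_Tr \<pi>T] .
  have HT: "H \<in> Tr T (sc T A Z) (sc T A Z2)" unfolding H_def using parc_Tr[OF idt_Tr \<pi>'T] .
  have HG: "H \<circ>\<^sub>T G = ID (sc T A Z2)" unfolding H_def G_def using ic_right[OF \<pi>T \<pi>'T] \<pi>'\<pi> parc_id by simp
  have GH: "G \<circ>\<^sub>T H = ID (sc T A Z)" unfolding H_def G_def using ic_right[OF \<pi>'T \<pi>T] \<pi>\<pi>' parc_id by simp
  define \<sigma>2' where "\<sigma>2' = G \<circ>\<^sub>T \<sigma>2"
  have p\<sigma>2': "pure_state T (sc T A Z) \<sigma>2'" unfolding \<sigma>2'_def using pure_inv[OF p\<sigma>2 GT HT HG GH] .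
  have EG: "E (sc T A Z) \<circ>\<^sub>T G = E (sc T A Z2)"
  proof -
    have "E (sc T A Z) \<circ>\<^sub>T G = (E A \<circ>\<^sub>T ID A) \<otimes>\<^sub>T (E Z \<circ>\<^sub>T \<pi>)"
      unfolding G_def using causal_par[of A Z] interchange[OF idt_Tr det_Tr \<pi>T det_Tr] by simp
    then show ?thesis using E\<pi> causal_par[of A Z2] seqc_id_r[OF det_Tr] by simp
  qed
  have \<sigma>2'1: "\<sigma>2' \<in> St1 T (sc T A Z)"
  proof (rule St1I)
    show "\<sigma>2' \<in> Tr T II (sc T A Z)" unfolding \<sigma>2'_def using \<sigma>2T GT by auto
    have "E (sc T A Z) \<circ>\<^sub>T \<sigma>2' = E (sc T A Z2) \<circ>\<^sub>T \<sigma>2" unfolding \<sigma>2'_def using assoc3[OF \<sigma>2T GT det_Tr] EG by simp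
    then show "prb T (E (sc T A Z) \<circ>\<^sub>T \<sigma>2') = 1" using prb_det1[OF \<sigma>2] by simp
  qed
  have m2: "marginal T A Z \<sigma>2' = \<omega>"
  proof -
    have IEZ: "ID A \<otimes>\<^sub>T E Z \<in> Tr T (sc T A Z) A" by (auto intro!: TrR)
    have "marginal T A Z \<sigma>2' = ((ID A \<otimes>\<^sub>T E Z) \<circ>\<^sub>T G) \<circ>\<^sub>T \<sigma>2"
      unfolding marginal_def \<sigma>2'_def using assoc3[OF \<sigma>2T GT IEZ] .
    also have "(ID A \<otimes>\<^sub>T E Z) \<circ>\<^sub>T G = ID A \<otimes>\<^sub>T E Z2"
      unfolding G_def using ic_right[OF \<pi>T det_Tr] E\<pi> by simp
    also have "ID A \<otimes>\<^sub>T E Z2 = (ID A \<otimes>\<^sub>T E Z') \<otimes>\<^sub>T E (sc T A C)"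
      unfolding Z2_def using causal_par[of Z' "sc T A C"] parc_assoc[OF idt_Tr det_Tr det_Tr, of A Z' "sc T A C"] by simp
    also have "\<dots> \<circ>\<^sub>T \<sigma>2 = ((ID A \<otimes>\<^sub>T E Z') \<circ>\<^sub>T \<Phi>) \<otimes>\<^sub>T (E (sc T A C) \<circ>\<^sub>T \<Psi>)"
      unfolding \<sigma>2_def using ic_states[OF IEZ' det_Tr F P] .
    also have "\<dots> = \<omega>" using norm_det[OF Ps1] mm \<omega>T unfolding \<omega>_def marginal_def by simp
    finally show ?thesis .
  qed
  obtain U where U: "U \<in> revgroup T Z" and \<sigma>U: "\<sigma>2' = (ID A \<otimes>\<^sub>T U) \<circ>\<^sub>T \<sigma>1"
  proof -
    have "marginal T A Z \<sigma>1 = marginal T A Z \<sigma>2'" using m1 m2 by simp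
    from purif_unique[OF \<sigma>1 \<sigma>2'1 p\<sigma>1 p\<sigma>2' this] show ?thesis using that by blast
  qed
  have UT: "U \<in> Tr T Z Z" using U by (simp add: revgroup_def reversible_def channel_def)
  define g2 where "g2 = g \<otimes>\<^sub>T E (sc T A C)"
  have g2T: "g2 \<in> Tr T Z2 II" unfolding g2_def Z2_def using parc_Tr[OF g det_Tr] by simp
  have IgT: "ID A \<otimes>\<^sub>T g \<in> Tr T W A" unfolding W_def using parc_Tr[OF idt_Tr g] by simp
  have D2: "(ID A \<otimes>\<^sub>T g2) \<circ>\<^sub>T \<sigma>2 = (ID A \<otimes>\<^sub>T g) \<circ>\<^sub>T \<Phi>"
  proof -
    have "ID A \<otimes>\<^sub>T g2 = (ID A \<otimes>\<^sub>T g) \<otimes>\<^sub>T E (sc T A C)"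
      unfolding g2_def using parc_assoc[OF idt_Tr g det_Tr] by simp
    then have "(ID A \<otimes>\<^sub>T g2) \<circ>\<^sub>T \<sigma>2 = ((ID A \<otimes>\<^sub>T g) \<circ>\<^sub>T \<Phi>) \<otimes>\<^sub>T (E (sc T A C) \<circ>\<^sub>T \<Psi>)"
      unfolding \<sigma>2_def using ic_states[OF IgT det_Tr F P] by simp
    also have "\<dots> = (ID A \<otimes>\<^sub>T g) \<circ>\<^sub>T \<Phi>" using norm_det[OF Ps1] par_idI_r[OF Tr_seq[OF F IgT]] by simp
    finally show ?thesis .
  qed
  define k where "k = g2 \<circ>\<^sub>T \<pi>'"
  have kT: "k \<in> Tr T Z II" unfolding k_def using \<pi>'T g2T by auto
  have Ik: "ID A \<otimes>\<^sub>T k \<in> Tr T (sc T A Z) A" using parc_Tr[OF idt_Tr kT, of A] by simp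
  have "(ID A \<otimes>\<^sub>T k) \<circ>\<^sub>T G = ID A \<otimes>\<^sub>T (k \<circ>\<^sub>T \<pi>)" unfolding G_def using ic_right[OF \<pi>T kT] .
  also have "k \<circ>\<^sub>T \<pi> = g2" unfolding k_def using assoc3[OF \<pi>T \<pi>'T g2T] \<pi>'\<pi> seqc_id_r[OF g2T] by simp
  finally have kG: "(ID A \<otimes>\<^sub>T k) \<circ>\<^sub>T G = ID A \<otimes>\<^sub>T g2" .
  define h where "h = k \<circ>\<^sub>T U"
  have hT: "h \<in> Tr T Z II" unfolding h_def using UT kT by auto
  have IU: "ID A \<otimes>\<^sub>T U \<in> Tr T (sc T A Z) (sc T A Z)" using parc_Tr[OF idt_Tr UT] .
  have \<sigma>1T: "\<sigma>1 \<in> Tr T II (sc T A Z)" using St1_Tr[OF \<sigma>1] .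
  have "(ID A \<otimes>\<^sub>T g) \<circ>\<^sub>T \<Phi> = ((ID A \<otimes>\<^sub>T k) \<circ>\<^sub>T G) \<circ>\<^sub>T \<sigma>2" using D2 kG by simp
  also have "\<dots> = (ID A \<otimes>\<^sub>T k) \<circ>\<^sub>T \<sigma>2'" unfolding \<sigma>2'_def using assoc3[OF \<sigma>2T GT Ik] by simp
  also have "\<dots> = ((ID A \<otimes>\<^sub>T k) \<circ>\<^sub>T (ID A \<otimes>\<^sub>T U)) \<circ>\<^sub>T \<sigma>1" using \<sigma>U assoc3[OF \<sigma>1T IU Ik] by simp
  also have "\<dots> = (ID A \<otimes>\<^sub>T h) \<circ>\<^sub>T \<sigma>1" unfolding h_def using ic_right[OF UT kT] by simp
  finally have e1: "(ID A \<otimes>\<^sub>T g) \<circ>\<^sub>T \<Phi> = (ID A \<otimes>\<^sub>T h) \<circ>\<^sub>T \<sigma>1" .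
  have ICF: "ID C \<otimes>\<^sub>T \<Phi> \<in> Tr T C Z" unfolding Z_def using parc_Tr[OF idt_Tr F, of C] by simp
  have IICF: "ID A \<otimes>\<^sub>T (ID C \<otimes>\<^sub>T \<Phi>) \<in> Tr T (sc T A C) (sc T A Z)" using parc_Tr[OF idt_Tr ICF] .
  have Ih: "ID A \<otimes>\<^sub>T h \<in> Tr T (sc T A Z) A" using parc_Tr[OF idt_Tr hT, of A] by simp
  have "\<sigma>1 = (ID (sc T A C) \<otimes>\<^sub>T \<Phi>) \<circ>\<^sub>T \<Psi>" unfolding \<sigma>1_def using state_par[OF P F] .
  also have "ID (sc T A C) \<otimes>\<^sub>T \<Phi> = ID A \<otimes>\<^sub>T (ID C \<otimes>\<^sub>T \<Phi>)"
    using parc_id[of A C] parc_assoc[OF idt_Tr idt_Tr F, of A C] by simp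
  finally have "(ID A \<otimes>\<^sub>T h) \<circ>\<^sub>T \<sigma>1 = ((ID A \<otimes>\<^sub>T h) \<circ>\<^sub>T (ID A \<otimes>\<^sub>T (ID C \<otimes>\<^sub>T \<Phi>))) \<circ>\<^sub>T \<Psi>"
    using assoc3[OF P IICF Ih] by simp
  also have "\<dots> = (ID A \<otimes>\<^sub>T (h \<circ>\<^sub>T (ID C \<otimes>\<^sub>T \<Phi>))) \<circ>\<^sub>T \<Psi>" using ic_right[OF ICF hT] by simp
  finally have "(ID A \<otimes>\<^sub>T g) \<circ>\<^sub>T \<Phi> = (ID A \<otimes>\<^sub>T (h \<circ>\<^sub>T (ID C \<otimes>\<^sub>T \<Phi>))) \<circ>\<^sub>T \<Psi>" using e1 by simp
  moreover have "h \<circ>\<^sub>T (ID C \<otimes>\<^sub>T \<Phi>) \<in> Tr T C II" using ICF hT by auto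
  ultimately show ?thesis by blast
qed

end

context purif_opt begin

lemma steering:
  assumes Ps1: "\<Psi> \<in> St1 T (sc T A C)" and pP: "pure_state T (sc T A C) \<Psi>"
    and R: "refines T II A D (marginal T A C \<Psi>)"
  shows "\<exists>b\<in>Tr T C II. D = (ID A \<otimes>\<^sub>T b) \<circ>\<^sub>T \<Psi>"
proof -
  obtain Z' \<Phi> g where "\<Phi> \<in> St1 T (sc T A Z')" "pure_state T (sc T A Z') \<Phi>"
      "marginal T A Z' \<Phi> = marginal T A C \<Psi>" "g \<in> Tr T Z' II" "(ID A \<otimes>\<^sub>T g) \<circ>\<^sub>T \<Phi> = D"
    using phi_part[OF Ps1 R] by blast
  then show ?thesis using transfer[OF Ps1 pP] by metis
qed

lemma refine_effect:
  assumes P: "\<Psi> \<in> Tr T II (sc T A C)" and c: "c \<in> Tr T C II"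
  shows "refines T II A ((ID A \<otimes>\<^sub>T c) \<circ>\<^sub>T \<Psi>) (marginal T A C \<Psi>)"
proof -
  obtain Ps where Ps: "Ps \<in> Tests T II (sc T A C)" "\<Psi> \<in> set Ps" using Tr_in_test[OF P] by blast
  obtain k where k: "k < length Ps" "Ps ! k = \<Psi>" using Ps(2) by (metis in_set_conv_nth)
  have "refines T II A ((ID A \<otimes>\<^sub>T c) \<circ>\<^sub>T Ps!k) ((ID A \<otimes>\<^sub>T E C) \<circ>\<^sub>T \<Psi>)"
    by (rule refine_eff_l[OF Ps(1) _ issum_single[of "nth Ps" k \<Psi>, OF k(2) P] _ c]) (use k in auto)
  then show ?thesis using k unfolding marginal_def by simp
qed

lemma svec_eval: "e \<in> Tr T A II \<Longrightarrow> svec T A \<rho> e = prb T (e \<circ>\<^sub>T \<rho>)"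
  unfolding svec_def Eff_def by simp

lemma internal_faithful:
  assumes Ps1: "\<Psi> \<in> St1 T (sc T A C)" and pP: "pure_state T (sc T A C) \<Psi>"
    and int: "internal T A (marginal T A C \<Psi>)"
  shows "dyn_faithful T A C \<Psi>"
  unfolding dyn_faithful_def
proof (intro conjI allI impI)
  have P: "\<Psi> \<in> Tr T II (sc T A C)" using Ps1 St1_Tr by auto
  show "\<Psi> \<in> St T (sc T A C)" using P by (simp add: St_def)
  fix B X X' assume X: "X \<in> Tr T A B" and X': "X' \<in> Tr T A B"
    and eq: "(X \<otimes>\<^sub>T ID C) \<circ>\<^sub>T \<Psi> = (X' \<otimes>\<^sub>T ID C) \<circ>\<^sub>T \<Psi>"
  define \<omega> where "\<omega> = marginal T A C \<Psi>"
  have comm: "Y \<circ>\<^sub>T ((ID A \<otimes>\<^sub>T b) \<circ>\<^sub>T \<Psi>) = (ID B \<otimes>\<^sub>T b) \<circ>\<^sub>T ((Y \<otimes>\<^sub>T ID C) \<circ>\<^sub>T \<Psi>)"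
    if Y: "Y \<in> Tr T A B" and b: "b \<in> Tr T C II" for Y b
  proof -
    have Ib: "ID A \<otimes>\<^sub>T b \<in> Tr T (sc T A C) A" using parc_Tr[OF idt_Tr b, of A] by simp
    have YI: "Y \<otimes>\<^sub>T ID C \<in> Tr T (sc T A C) (sc T B C)" using parc_Tr[OF Y idt_Tr] .
    have IBb: "ID B \<otimes>\<^sub>T b \<in> Tr T (sc T B C) B" using parc_Tr[OF idt_Tr b, of B] by simp
    have "Y \<circ>\<^sub>T (ID A \<otimes>\<^sub>T b) = Y \<otimes>\<^sub>T b" using ic_split1[OF Y b] Y by simp
    also have "\<dots> = (ID B \<otimes>\<^sub>T b) \<circ>\<^sub>T (Y \<otimes>\<^sub>T ID C)" using ic_split2[OF Y b] by simp
    finally have e: "Y \<circ>\<^sub>T (ID A \<otimes>\<^sub>T b) = (ID B \<otimes>\<^sub>T b) \<circ>\<^sub>T (Y \<otimes>\<^sub>T ID C)" .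
    show ?thesis using assoc3[OF P Ib Y] e assoc3[OF P YI IBb] by simp
  qed
  have onref: "X \<circ>\<^sub>T D = X' \<circ>\<^sub>T D" if "D \<in> refset T II A \<omega>" for D
  proof -
    have "refines T II A D (marginal T A C \<Psi>)" using that by (simp add: refset_def \<omega>_def)
    from steering[OF Ps1 pP this] obtain b where b: "b \<in> Tr T C II" "D = (ID A \<otimes>\<^sub>T b) \<circ>\<^sub>T \<Psi>"
      by blast
    show ?thesis using comm[OF X b(1)] comm[OF X' b(1)] eq b(2) by simp
  qed
  have refT: "D \<in> Tr T II A" if "D \<in> refset T II A \<omega>" for D
  proof -
    have "refines T II A D \<omega>" using that by (simp add: refset_def)
    then show ?thesis by (rule refines_Tr)
  qed
  have onst: "X \<circ>\<^sub>T \<rho> = X' \<circ>\<^sub>T \<rho>" if \<rho>: "\<rho> \<in> Tr T II A" for \<rho>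
  proof (rule state_eq)
    show "X \<circ>\<^sub>T \<rho> \<in> Tr T II B" "X' \<circ>\<^sub>T \<rho> \<in> Tr T II B" using \<rho> X X' by auto
    show "\<forall>a\<in>Tr T B II. prb T (a \<circ>\<^sub>T (X \<circ>\<^sub>T \<rho>)) = prb T (a \<circ>\<^sub>T (X' \<circ>\<^sub>T \<rho>))"
    proof
      fix a assume a: "a \<in> Tr T B II"
      have aX: "a \<circ>\<^sub>T X \<in> Tr T A II" "a \<circ>\<^sub>T X' \<in> Tr T A II" using a X X' by auto
      have "svec T A \<rho> \<in> rspan (svec T A ` St T A)"
        unfolding rspan_def
        by (rule CollectI, rule exI[of _ "{svec T A \<rho>}"], rule exI[of _ "\<lambda>_. 1"]) (use \<rho> in \<open>auto simp: St_def\<close>)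
      then have "svec T A \<rho> \<in> rspan (svec T A ` refset T II A \<omega>)"
        using int unfolding internal_def \<omega>_def by simp
      then obtain F c where F: "finite F" "F \<subseteq> svec T A ` refset T II A \<omega>"
          and sv: "svec T A \<rho> = (\<lambda>x. \<Sum>v\<in>F. c v * v x)"
        unfolding rspan_def by blast
      have vF: "v (a \<circ>\<^sub>T X) = v (a \<circ>\<^sub>T X')" if vin: "v \<in> F" for v
      proof -
        obtain D where D: "D \<in> refset T II A \<omega>" "v = svec T A D" using F(2) vin by blast
        have "v (a \<circ>\<^sub>T X) = prb T (a \<circ>\<^sub>T (X \<circ>\<^sub>T D))" using D svec_eval[OF aX(1)] assoc3[OF refT[OF D(1)] X a] by simp
        also have "\<dots> = prb T (a \<circ>\<^sub>T (X' \<circ>\<^sub>T D))" using onref[OF D(1)] by simp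
        also have "\<dots> = v (a \<circ>\<^sub>T X')" using D svec_eval[OF aX(2)] assoc3[OF refT[OF D(1)] X' a] by simp
        finally show ?thesis .
      qed
      have "(\<Sum>v\<in>F. c v * v (a \<circ>\<^sub>T X)) = (\<Sum>v\<in>F. c v * v (a \<circ>\<^sub>T X'))"
        by (rule sum.cong) (simp_all add: vF)
      then have "svec T A \<rho> (a \<circ>\<^sub>T X) = svec T A \<rho> (a \<circ>\<^sub>T X')" using sv by simp
      then show "prb T (a \<circ>\<^sub>T (X \<circ>\<^sub>T \<rho>)) = prb T (a \<circ>\<^sub>T (X' \<circ>\<^sub>T \<rho>))"
        using svec_eval[OF aX(1)] svec_eval[OF aX(2)] assoc3[OF \<rho> X a] assoc3[OF \<rho> X' a] by simp
    qed
  qed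
  show "X = X'"
  proof (rule trans_ident[OF X X'], intro allI ballI)
    fix S r assume r: "r \<in> St T (sc T A S)"
    have rT: "r \<in> Tr T II (sc T A S)" using r by (simp add: St_def)
    show "(X \<otimes>\<^sub>T ID S) \<circ>\<^sub>T r = (X' \<otimes>\<^sub>T ID S) \<circ>\<^sub>T r"
    proof (rule local_discr')
      show "(X \<otimes>\<^sub>T ID S) \<circ>\<^sub>T r \<in> Tr T II (sc T B S)" "(X' \<otimes>\<^sub>T ID S) \<circ>\<^sub>T r \<in> Tr T II (sc T B S)"
        using rT parc_Tr[OF X idt_Tr, of S] parc_Tr[OF X' idt_Tr, of S] by auto
      show "\<forall>a\<in>Tr T B II. \<forall>b\<in>Tr T S II. prb T ((a \<otimes>\<^sub>T b) \<circ>\<^sub>T ((X \<otimes>\<^sub>T ID S) \<circ>\<^sub>T r)) = prb T ((a \<otimes>\<^sub>T b) \<circ>\<^sub>T ((X' \<otimes>\<^sub>T ID S) \<circ>\<^sub>T r))"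
      proof (intro ballI)
        fix a b assume a: "a \<in> Tr T B II" and b: "b \<in> Tr T S II"
        have Ib: "ID A \<otimes>\<^sub>T b \<in> Tr T (sc T A S) A" using parc_Tr[OF idt_Tr b, of A] by simp
        have ab: "a \<otimes>\<^sub>T b \<in> Tr T (sc T B S) II" using parc_Tr[OF a b] by simp
        have tau: "(ID A \<otimes>\<^sub>T b) \<circ>\<^sub>T r \<in> Tr T II A" using rT Ib by auto
        have gen: "prb T ((a \<otimes>\<^sub>T b) \<circ>\<^sub>T ((Y \<otimes>\<^sub>T ID S) \<circ>\<^sub>T r)) = prb T (a \<circ>\<^sub>T (Y \<circ>\<^sub>T ((ID A \<otimes>\<^sub>T b) \<circ>\<^sub>T r)))"
          if Y: "Y \<in> Tr T A B" for Y
        proof -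
          have YI: "Y \<otimes>\<^sub>T ID S \<in> Tr T (sc T A S) (sc T B S)" using parc_Tr[OF Y idt_Tr] .
          have aY: "a \<circ>\<^sub>T Y \<in> Tr T A II" using a Y by auto
          have "(a \<otimes>\<^sub>T b) \<circ>\<^sub>T (Y \<otimes>\<^sub>T ID S) = (a \<circ>\<^sub>T Y) \<otimes>\<^sub>T (b \<circ>\<^sub>T ID S)"
            using interchange[OF Y a idt_Tr b] .
          also have "\<dots> = (a \<circ>\<^sub>T Y) \<circ>\<^sub>T (ID A \<otimes>\<^sub>T b)" using seqc_id_r[OF b] eff_split_l[OF aY b] by simp
          finally have e: "(a \<otimes>\<^sub>T b) \<circ>\<^sub>T (Y \<otimes>\<^sub>T ID S) = (a \<circ>\<^sub>T Y) \<circ>\<^sub>T (ID A \<otimes>\<^sub>T b)" .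
          have "(a \<otimes>\<^sub>T b) \<circ>\<^sub>T ((Y \<otimes>\<^sub>T ID S) \<circ>\<^sub>T r) = ((a \<circ>\<^sub>T Y) \<circ>\<^sub>T (ID A \<otimes>\<^sub>T b)) \<circ>\<^sub>T r"
            using assoc3[OF rT YI ab] e by simp
          also have "\<dots> = (a \<circ>\<^sub>T Y) \<circ>\<^sub>T ((ID A \<otimes>\<^sub>T b) \<circ>\<^sub>T r)" using assoc3[OF rT Ib aY] by simp
          also have "\<dots> = a \<circ>\<^sub>T (Y \<circ>\<^sub>T ((ID A \<otimes>\<^sub>T b) \<circ>\<^sub>T r))" using assoc3[OF tau Y a] by simp
          finally show ?thesis by simp
        qed
        show "prb T ((a \<otimes>\<^sub>T b) \<circ>\<^sub>T ((X \<otimes>\<^sub>T ID S) \<circ>\<^sub>T r)) = prb T ((a \<otimes>\<^sub>T b) \<circ>\<^sub>T ((X' \<otimes>\<^sub>T ID S) \<circ>\<^sub>T r))"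
          using gen[OF X] gen[OF X'] onst[OF tau] by simp
      qed
    qed
  qed
qed

end

interpretation fv: vector_space "\<lambda>(c::real) (f::'a\<Rightarrow>real). (\<lambda>x. c * f x)"
  by unfold_locales (auto simp: fun_eq_iff algebra_simps)

definition evl :: "(real \<times> 'a) list \<Rightarrow> ('a \<Rightarrow> real) \<Rightarrow> real" where
  "evl ps f = sum_list (map (\<lambda>(c,x). c * f x) ps)"

lemma evl_add: "evl ps (f + g) = evl ps f + evl ps g"
  unfolding evl_def by (induction ps) (auto simp: plus_fun_def distrib_left)
lemma evl_diff: "evl ps (f - g) = evl ps f - evl ps g"
  unfolding evl_def by (induction ps) (auto simp: fun_diff_def right_diff_distrib)
lemma evl_scale: "evl ps (\<lambda>x. k * f x) = k * evl ps f"
  unfolding evl_def by (induction ps) (auto simp: distrib_left)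
lemma evl_zero: "evl ps 0 = 0"
  unfolding evl_def by (induction ps) auto
lemma evl_app: "evl (ps @ qs) f = evl ps f + evl qs f"
  unfolding evl_def by simp
lemma evl_smul: "evl (map (\<lambda>(c,x). (k*c, x)) ps) f = k * evl ps f"
  unfolding evl_def by (induction ps) (auto simp: distrib_left)
lemma evl_single: "evl [(c,x)] f = c * f x"
  unfolding evl_def by simp

lemma evl_span:
  assumes "\<forall>w\<in>S. evl ps w = 0" "v \<in> fv.span S"
  shows "evl ps v = 0"
proof -
  have sub: "fv.subspace {f. evl ps f = 0}"
    unfolding fv.subspace_def
  proof (intro conjI ballI allI)
    show "0 \<in> {f. evl ps f = 0}" by (simp add: evl_zero)
    fix x y assume "x \<in> {f. evl ps f = 0}" "y \<in> {f. evl ps f = 0}"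
    then show "x + y \<in> {f. evl ps f = 0}" by (simp add: evl_add)
  next
    fix c and x :: "'a \<Rightarrow> real" assume "x \<in> {f. evl ps f = 0}"
    then show "(\<lambda>xa. c * x xa) \<in> {f. evl ps f = 0}" by (simp add: evl_scale)
  qed
  have "S \<subseteq> {f. evl ps f = 0}" using assms(1) by blast
  then have "fv.span S \<subseteq> {f. evl ps f = 0}" using fv.span_minimal[OF _ sub] by blast
  then show ?thesis using assms(2) by blast
qed

lemma dual_exists:
  fixes Ev :: "'a set"
  defines "Vz \<equiv> {f::'a\<Rightarrow>real. \<forall>x. x \<notin> Ev \<longrightarrow> f x = 0}"
  shows "set ws \<subseteq> Vz \<Longrightarrow> v0 \<in> Vz \<Longrightarrow> v0 \<notin> fv.span (set ws) \<Longrightarrow>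
     \<exists>ps. set (map snd ps) \<subseteq> Ev \<and> (\<forall>w\<in>set ws. evl ps w = 0) \<and> evl ps v0 = 1"
proof (induction ws arbitrary: v0)
  case Nil
  then have "v0 \<noteq> 0" by auto
  then obtain x where x: "v0 x \<noteq> 0" by (auto simp: fun_eq_iff)
  then have "x \<in> Ev" using Nil.prems(2) unfolding Vz_def by auto
  then show ?case using x by (intro exI[of _ "[(1 / v0 x, x)]"]) (simp add: evl_single)
next
  case (Cons w ws)
  let ?S = "set ws"
  have wsV: "set ws \<subseteq> Vz" and wV: "w \<in> Vz" using Cons.prems(1) by auto
  show ?case
  proof (cases "w \<in> fv.span ?S")
    case True
    have "fv.span (insert w ?S) = fv.span ?S"
      using True by (metis fv.span_redundant)
    then have "v0 \<notin> fv.span ?S" using Cons.prems(3) by simp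
    then obtain ps where ps: "set (map snd ps) \<subseteq> Ev" "\<forall>w\<in>?S. evl ps w = 0" "evl ps v0 = 1"
      using Cons.IH[OF wsV Cons.prems(2)] by blast
    have "evl ps w = 0" using evl_span[OF ps(2) True] .
    then show ?thesis using ps by auto
  next
    case False
    have nv0: "v0 \<notin> fv.span ?S" using Cons.prems(3) fv.span_mono[of ?S "insert w ?S"] by auto
    obtain p1 where p1: "set (map snd p1) \<subseteq> Ev" "\<forall>w\<in>?S. evl p1 w = 0" "evl p1 v0 = 1"
      using Cons.IH[OF wsV Cons.prems(2) nv0] by blast
    obtain p2 where p2: "set (map snd p2) \<subseteq> Ev" "\<forall>w\<in>?S. evl p2 w = 0" "evl p2 w = 1"
      using Cons.IH[OF wsV wV False] by blast
    define t where "t = evl p2 v0"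
    define sm where "sm = (\<lambda>k (ps::(real \<times> 'a) list). map (\<lambda>(c,x). (k*c, x)) ps)"
    have sm_snd: "snd ` set (sm k ps) = snd ` set ps" for k ps
      unfolding sm_def by (induction ps) auto
    have sm_ev: "evl (sm k ps) f = k * evl ps f" for k ps f unfolding sm_def by (rule evl_smul)
    show ?thesis
    proof (cases "evl p1 w * t = 1")
      case False
      define q where "q = p1 @ sm (- evl p1 w) p2"
      have qv: "evl q v0 = 1 - evl p1 w * t" unfolding q_def using p1 by (simp add: evl_app sm_ev t_def)
      have qw: "evl q w = 0" unfolding q_def using p2 by (simp add: evl_app sm_ev)
      have qS: "\<forall>u\<in>?S. evl q u = 0" unfolding q_def using p1 p2 by (simp add: evl_app sm_ev)
      define q' where "q' = sm (1 / (1 - evl p1 w * t)) q"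
      have "1 - evl p1 w * t \<noteq> 0" using False by simp
      then have "evl q' v0 = 1" unfolding q'_def using qv by (simp add: sm_ev)
      moreover have "set (map snd q') \<subseteq> Ev" unfolding q'_def q_def using p1 p2 by (simp add: sm_snd image_Un)
      moreover have "\<forall>u\<in>set (w # ws). evl q' u = 0"
      proof
        fix u assume "u \<in> set (w # ws)"
        then have "evl q u = 0" using qw qS by auto
        then show "evl q' u = 0" unfolding q'_def sm_ev by simp
      qed
      ultimately show ?thesis by blast
    next
      case True
      define u where "u = (\<lambda>x. t * w x) - v0"
      have uV: "u \<in> Vz"
      proof -
        have "\<forall>x. x \<notin> Ev \<longrightarrow> w x = 0" "\<forall>x. x \<notin> Ev \<longrightarrow> v0 x = 0"
          using wV Cons.prems(2) unfolding Vz_def by auto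
        then show ?thesis unfolding u_def Vz_def by (simp add: fun_diff_def)
      qed
      have nu: "u \<notin> fv.span ?S"
      proof
        assume "u \<in> fv.span ?S"
        then have u1: "u \<in> fv.span (insert w ?S)" using fv.span_mono[of ?S "insert w ?S"] by blast
        have w1: "(\<lambda>x. t * w x) \<in> fv.span (insert w ?S)"
          using fv.span_scale[OF fv.span_base[of w "insert w ?S"]] by simp
        have "(\<lambda>x. t * w x) - u \<in> fv.span (insert w ?S)"
          using fv.span_diff[OF w1 u1] .
        moreover have "(\<lambda>x. t * w x) - u = v0" unfolding u_def by (simp add: fun_eq_iff fun_diff_def)
        ultimately show False using Cons.prems(3) by simp
      qed
      obtain p3 where p3: "set (map snd p3) \<subseteq> Ev" "\<forall>w\<in>?S. evl p3 w = 0" "evl p3 u = 1"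
        using Cons.IH[OF wsV uV nu] by blast
      have p3u: "t * evl p3 w - evl p3 v0 = 1" using p3(3) unfolding u_def by (simp add: evl_diff evl_scale)
      define q where "q = sm (-1) (p3 @ sm (- evl p3 w) p2)"
      have q1: "evl q v0 = 1" unfolding q_def using p3u by (simp add: evl_app sm_ev t_def algebra_simps)
      have qw: "evl q w = 0" unfolding q_def using p2 by (simp add: evl_app sm_ev)
      have qS: "\<forall>u\<in>?S. evl q u = 0" unfolding q_def using p2 p3 by (simp add: evl_app sm_ev)
      have q2: "set (map snd q) \<subseteq> Ev" unfolding q_def using p2 p3 by (simp add: sm_snd image_Un)
      have q3: "\<forall>u\<in>set (w # ws). evl q u = 0" using qw qS by simp
      show ?thesis by (rule exI[of _ q]) (intro conjI q1 q2 q3)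
    qed
  qed
qed


lemma sum_fun_apply: "(\<Sum>a\<in>F. (g a :: 'b \<Rightarrow> real)) x = (\<Sum>a\<in>F. g a x)"
proof (cases "finite F")
  case True then show ?thesis by (induction F rule: finite_induct) (auto simp: plus_fun_def zero_fun_def)
next
  case False then show ?thesis by (simp add: zero_fun_def)
qed

lemma rspan_span: "rspan S = fv.span S"
proof -
  have e: "(\<lambda>x. \<Sum>v\<in>F. c v * v x) = (\<Sum>v\<in>F. (\<lambda>x. c v * v x))" for F and c :: "('b \<Rightarrow> real) \<Rightarrow> real"
    by (simp add: fun_eq_iff sum_fun_apply)
  show ?thesis unfolding rspan_def fv.span_explicit e by blast
qed

lemma scale_sum_aux:
  fixes ys :: "(real \<times> 'a) list" and M :: real
  shows "sum_list (map (\<lambda>(l,x). l * g x) (map (\<lambda>(c,x). (k * c/M, x)) ys)) = k * sum_list (map (\<lambda>(c,x). c * g x) ys) / M"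
proof (induction ys)
  case Nil then show ?case by simp
next
  case (Cons y ys)
  obtain c x where y: "y = (c, x)" by (cases y)
  have "sum_list (map (\<lambda>(l,x). l * g x) (map (\<lambda>(c,x). (k * c/M, x)) (y # ys)))
      = k * c / M * g x + k * sum_list (map (\<lambda>(c,x). c * g x) ys) / M" using Cons y by simp
  also have "\<dots> = k * (c * g x + sum_list (map (\<lambda>(c,x). c * g x) ys)) / M"
    by (simp add: add_divide_distrib distrib_left)
  finally show ?case using y by simp
qed

lemma filter_split_sum:
  fixes ps :: "(real \<times> 'a) list"
  shows "sum_list (map (\<lambda>(c,x). c * g x) ps) = sum_list (map (\<lambda>(c,x). c * g x) (filter (\<lambda>(c,x). c > 0) ps))
       - (- 1) * sum_list (map (\<lambda>(c,x). c * g x) (filter (\<lambda>(c,x). c < 0) ps))"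
proof (induction ps)
  case Nil then show ?case by simp
next
  case (Cons y ys)
  obtain c x where y: "y = (c, x)" by (cases y)
  consider "c > 0" | "c < 0" | "c = 0" by linarith
  then show ?case using Cons y by cases simp_all
qed

lemma split_sum:
  fixes ps :: "(real \<times> 'a) list" and M :: real
  shows "sum_list (map (\<lambda>(l,x). l * g x) (map (\<lambda>(c,x). (1 * c/M, x)) (filter (\<lambda>(c,x). c > 0) ps)))
       - sum_list (map (\<lambda>(l,x). l * g x) (map (\<lambda>(c,x). ((-1) * c/M, x)) (filter (\<lambda>(c,x). c < 0) ps)))
       = sum_list (map (\<lambda>(c,x). c * g x) ps) / M"
  unfolding scale_sum_aux filter_split_sum[of g ps] by (simp add: diff_divide_distrib add_divide_distrib)

lemma split_fst_pos:
  fixes ps :: "(real \<times> 'a) list"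
  shows "sum_list (map (\<lambda>(c,x). 1 * c) (filter (\<lambda>(c,x). c > 0) ps)) \<le> sum_list (map (\<lambda>(c,x). \<bar>c\<bar>) ps)
     \<and> sum_list (map (\<lambda>(c,x). (-1) * c) (filter (\<lambda>(c,x). c < 0) ps)) \<le> sum_list (map (\<lambda>(c,x). \<bar>c\<bar>) ps)"
proof (induction ps)
  case Nil then show ?case by simp
next
  case (Cons y ys)
  obtain c x where y: "y = (c, x)" by (cases y)
  consider "c > 0" | "c < 0" | "c = 0" by linarith
  then show ?case using Cons y by cases (auto simp: abs_if)
qed

lemma sum_list_scale: "sum_list (map (\<lambda>(l,e). (k::real) * f l e) L) = k * sum_list (map (\<lambda>(l,e). f l e) L)"
  by (induction L) (simp_all add: ring_distribs case_prod_beta)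

context opt begin

lemma ep_I: "C \<in> Tr T A II \<Longrightarrow> \<tau> \<in> Tr T II A \<Longrightarrow> ext_prob T C II \<tau> (ID II) = prb T (C \<circ>\<^sub>T \<tau>)"
proof -
  assume C: "C \<in> Tr T A II" and t: "\<tau> \<in> Tr T II A"
  have "C \<circ>\<^sub>T \<tau> \<in> Tr T II II" using C t by auto
  then show ?thesis unfolding ext_prob_def using seqc_id_l[of "C \<circ>\<^sub>T \<tau>" II II] C by simp
qed

lemma zero_eff: "\<exists>z\<in>Tr T A II. \<forall>\<tau>\<in>Tr T II A. prb T (z \<circ>\<^sub>T \<tau>) = 0"
proof -
  obtain K \<rho>0 \<rho>1 a0 a1 where r0: "\<rho>0 \<in> St1 T K" and aa: "[a0, a1] \<in> Tests T K II"
      and p: "prb T (a1 \<circ>\<^sub>T \<rho>0) = 0"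
    using perf_dist by blast
  have p0: "a1 \<circ>\<^sub>T \<rho>0 \<in> Tr T II II" using Tests_Tr[OF aa] St1_Tr[OF r0] by auto
  have zT: "E A \<otimes>\<^sub>T (a1 \<circ>\<^sub>T \<rho>0) \<in> Tr T A II" using parc_Tr[OF det_Tr p0, of A] by simp
  have "prb T ((E A \<otimes>\<^sub>T (a1 \<circ>\<^sub>T \<rho>0)) \<circ>\<^sub>T \<tau>) = 0" if \<tau>: "\<tau> \<in> Tr T II A" for \<tau>
  proof -
    have "(E A \<otimes>\<^sub>T (a1 \<circ>\<^sub>T \<rho>0)) \<circ>\<^sub>T (\<tau> \<otimes>\<^sub>T ID II) = (E A \<circ>\<^sub>T \<tau>) \<otimes>\<^sub>T ((a1 \<circ>\<^sub>T \<rho>0) \<circ>\<^sub>T ID II)"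
      using ic_states[OF det_Tr p0 \<tau> idt_Tr] .
    then have "(E A \<otimes>\<^sub>T (a1 \<circ>\<^sub>T \<rho>0)) \<circ>\<^sub>T \<tau> = (E A \<circ>\<^sub>T \<tau>) \<otimes>\<^sub>T (a1 \<circ>\<^sub>T \<rho>0)"
      using par_idI_r[OF \<tau>] seqc_id_r[OF p0] by simp
    then show ?thesis using prb_parc[of "E A \<circ>\<^sub>T \<tau>" "a1 \<circ>\<^sub>T \<rho>0"] p0 \<tau> p by auto
  qed
  then show ?thesis using zT by blast
qed

lemma eff_comb:
  "(\<forall>(l,e)\<in>set L. 0 \<le> l \<and> e \<in> Tr T A II) \<Longrightarrow> sum_list (map fst L) < 1 \<Longrightarrow>
   \<exists>a\<in>Tr T A II. \<forall>\<tau>\<in>Tr T II A. prb T (a \<circ>\<^sub>T \<tau>) = sum_list (map (\<lambda>(l,e). l * prb T (e \<circ>\<^sub>T \<tau>)) L)"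
proof (induction L rule: length_induct)
  case (1 xs)
  show ?case
  proof (cases xs)
    case Nil then show ?thesis using zero_eff by simp
  next
  case (Cons le L)
  obtain l e where le: "le = (l, e)" by (cases le)
  have l0: "0 \<le> l" and e: "e \<in> Tr T A II" using "1.prems"(1) le Cons by auto
  have Lp: "\<forall>(l,e)\<in>set L. 0 \<le> l \<and> e \<in> Tr T A II" using "1.prems"(1) Cons by auto
  have sL: "sum_list (map fst L) < 1 - l" using "1.prems"(2) le Cons by simp
  have sL0: "0 \<le> sum_list (map fst L)" using Lp by (induction L) auto
  have l1: "l < 1" using sL sL0 by simp
  define L' where "L' = map (\<lambda>(l',e'). (l' / (1 - l), e')) L"
  have L'p: "\<forall>(l,e)\<in>set L'. 0 \<le> l \<and> e \<in> Tr T A II" using Lp l1 unfolding L'_def by auto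
  have "sum_list (map fst L') = sum_list (map fst L) / (1 - l)"
    unfolding L'_def by (induction L) (auto simp: add_divide_distrib)
  then have sL': "sum_list (map fst L') < 1" using sL l1 by simp
  obtain a' where a': "a' \<in> Tr T A II" "\<forall>\<tau>\<in>Tr T II A. prb T (a' \<circ>\<^sub>T \<tau>) = sum_list (map (\<lambda>(l,e). l * prb T (e \<circ>\<^sub>T \<tau>)) L')"
  proof -
    have lenL': "length L' < length xs" using Cons unfolding L'_def by simp
    have "\<exists>a\<in>Tr T A II. \<forall>\<tau>\<in>Tr T II A. prb T (a \<circ>\<^sub>T \<tau>) = sum_list (map (\<lambda>(l,e). l * prb T (e \<circ>\<^sub>T \<tau>)) L')"
      using "1.IH" lenL' L'p sL' by blast
    then show ?thesis using that by blast
  qed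
  obtain D where D: "acts_lin T A II D [(l, e), (1 - l, a')]" using convex_Tr[OF e a'(1) l0] l1 by fastforce
  have DT: "D \<in> Tr T A II" using D by (simp add: acts_lin_def)
  have "prb T (D \<circ>\<^sub>T \<tau>) = sum_list (map (\<lambda>(l,e). l * prb T (e \<circ>\<^sub>T \<tau>)) xs)" if \<tau>: "\<tau> \<in> Tr T II A" for \<tau>
  proof -
    have "ext_prob T D II \<tau> (ID II) = l * ext_prob T e II \<tau> (ID II) + (1 - l) * ext_prob T a' II \<tau> (ID II)"
      using D \<tau> unfolding acts_lin_def by auto
    then have "prb T (D \<circ>\<^sub>T \<tau>) = l * prb T (e \<circ>\<^sub>T \<tau>) + (1 - l) * prb T (a' \<circ>\<^sub>T \<tau>)"
      using ep_I[OF DT \<tau>] ep_I[OF e \<tau>] ep_I[OF a'(1) \<tau>] by simp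
    also have "(1 - l) * prb T (a' \<circ>\<^sub>T \<tau>) = sum_list (map (\<lambda>(l,e). l * prb T (e \<circ>\<^sub>T \<tau>)) L)"
    proof -
      have "(1 - l) * prb T (a' \<circ>\<^sub>T \<tau>) = (1 - l) * sum_list (map (\<lambda>(l',e'). (l' / (1 - l)) * prb T (e' \<circ>\<^sub>T \<tau>)) L)"
        using a'(2) \<tau> unfolding L'_def by (simp add: comp_def split_def)
      also have "\<dots> = sum_list (map (\<lambda>(l',e'). (1 - l) * ((l' / (1 - l)) * prb T (e' \<circ>\<^sub>T \<tau>))) L)"
        using sum_list_scale[of "1 - l" "\<lambda>l' e'. (l' / (1 - l)) * prb T (e' \<circ>\<^sub>T \<tau>)" L] by simp
      also have "\<dots> = sum_list (map (\<lambda>(l,e). l * prb T (e \<circ>\<^sub>T \<tau>)) L)"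
        using l1 by (simp add: case_prod_beta)
      finally show ?thesis .
    qed
    finally show ?thesis using le Cons by simp
  qed
  then show ?thesis using DT by blast
  qed
qed

end

lemma fst_scale:
  fixes L :: "(real \<times> 'a) list"
  shows "sum_list (map fst (map (\<lambda>(c,x). (k*c/M, x)) L)) = k * sum_list (map fst L) / M"
  by (induction L) (auto simp: add_divide_distrib distrib_left)

lemma sum_abs_nonneg: "0 \<le> sum_list (map (\<lambda>(c,x). \<bar>c::real\<bar>) ps)"
  by (induction ps) auto

context purif_opt begin

lemma faithful_internal:
  assumes P: "\<Psi> \<in> Tr T II (sc T A C)" and df: "dyn_faithful T A C \<Psi>"
  shows "internal T A (marginal T A C \<Psi>)"
proof -
  define \<omega> where "\<omega> = marginal T A C \<Psi>"
  have \<omega>T: "\<omega> \<in> Tr T II A" using marg_Tr[OF P] by (simp add: \<omega>_def)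
  define G where "G = svec T A ` refset T II A \<omega>"
  have refSt: "refset T II A \<omega> \<subseteq> St T A"
    using refines_Tr unfolding refset_def St_def by blast
  have GS: "G \<subseteq> svec T A ` St T A" unfolding G_def using refSt by blast
  have key: "svec T A \<rho>0 \<in> fv.span G" if \<rho>0: "\<rho>0 \<in> St T A" for \<rho>0
  proof (rule ccontr)
    assume nv: "svec T A \<rho>0 \<notin> fv.span G"
    have \<rho>0T: "\<rho>0 \<in> Tr T II A" using \<rho>0 by (simp add: St_def)
    obtain F0 where F0: "finite F0" "F0 \<subseteq> St T A" "svec T A ` St T A \<subseteq> rspan (svec T A ` F0)"
      using fin_dim by blast
    obtain B where B: "B \<subseteq> G" "fv.independent B" "G \<subseteq> fv.span B"
      using fv.maximal_independent_subset by blast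
    have "B \<subseteq> fv.span (svec T A ` F0)" using B(1) GS F0(3) rspan_span by blast
    then have fB: "finite B" using fv.independent_span_bound[OF finite_imageI[OF F0(1)] B(2)] by blast
    obtain ws where ws: "set ws = B" using finite_list[OF fB] by blast
    have nvB: "svec T A \<rho>0 \<notin> fv.span (set ws)" using nv fv.span_mono[OF B(1)] ws by blast
    have vz: "\<forall>x. x \<notin> Tr T A II \<longrightarrow> svec T A D x = 0" for D unfolding svec_def Eff_def by simp
    have wsV: "set ws \<subseteq> {f. \<forall>x. x \<notin> Tr T A II \<longrightarrow> f x = 0}" using ws B(1) vz unfolding G_def by blast
    obtain ps where ps1: "set (map snd ps) \<subseteq> Tr T A II" and ps2: "\<forall>w\<in>set ws. evl ps w = 0"
        and ps3: "evl ps (svec T A \<rho>0) = 1"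
      using dual_exists[OF wsV _ nvB] vz by blast
    have evG: "evl ps (svec T A D) = 0" if "D \<in> refset T II A \<omega>" for D
    proof -
      have "svec T A D \<in> fv.span B" using B(3) that unfolding G_def by blast
      then show ?thesis using evl_span[of B ps] ps2 ws by blast
    qed
    have evS: "evl ps (svec T A \<tau>) = sum_list (map (\<lambda>(c,x). c * prb T (x \<circ>\<^sub>T \<tau>)) ps)" for \<tau>
    proof -
      have "(\<lambda>(c,x). c * svec T A \<tau> x) y = (\<lambda>(c,x). c * prb T (x \<circ>\<^sub>T \<tau>)) y" if "y \<in> set ps" for y
      proof -
        obtain c x where y: "y = (c, x)" by (cases y)
        have "x \<in> Tr T A II" using that ps1 y by force
        then show ?thesis using y by (simp add: svec_def Eff_def)
      qed
      then show ?thesis unfolding evl_def by (metis (no_types, lifting) map_eq_conv)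
    qed
    define M where "M = 1 + sum_list (map (\<lambda>(c,x). \<bar>c\<bar>) ps)"
    have M: "M > 0" using sum_abs_nonneg[of ps] by (simp add: M_def)
    define Pl where "Pl = map (\<lambda>(c,x). (1 * c/M, x)) (filter (\<lambda>(c,x). c > 0) ps)"
    define Nl where "Nl = map (\<lambda>(c,x). ((-1) * c/M, x)) (filter (\<lambda>(c,x). c < 0) ps)"
    have sp: "sum_list (map fst (filter (\<lambda>(c,x). c > 0) ps)) < M"
      "sum_list (map (\<lambda>(c,x). -c) (filter (\<lambda>(c,x). c < 0) ps)) < M"
    proof -
      have fe: "(\<lambda>(c::real,x::'t). c) = fst" by (simp add: fun_eq_iff)
      show "sum_list (map fst (filter (\<lambda>(c,x). c > 0) ps)) < M"
        "sum_list (map (\<lambda>(c,x). -c) (filter (\<lambda>(c,x). c < 0) ps)) < M"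
        using split_fst_pos[of ps] unfolding M_def by (simp_all add: fe)
    qed
    have "sum_list (map fst Pl) = sum_list (map fst (filter (\<lambda>(c,x). c > 0) ps)) / M"
      unfolding Pl_def using fst_scale[of 1 M] by simp
    then have sPl: "sum_list (map fst Pl) < 1" using sp(1) M by simp
    have "sum_list (map fst Nl) = (-1) * sum_list (map fst (filter (\<lambda>(c,x). c < 0) ps)) / M"
      unfolding Nl_def using fst_scale[of "-1" M] by simp
    moreover have "sum_list (map (\<lambda>(c,x). -c) L) = - sum_list (map fst L)" for L :: "(real \<times> 't) list"
      by (induction L) auto
    ultimately have sNl: "sum_list (map fst Nl) < 1" using sp(2) M by (simp add: less_divide_eq)
    have Plp: "\<forall>(l,e)\<in>set Pl. 0 \<le> l \<and> e \<in> Tr T A II" unfolding Pl_def using ps1 M by auto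
    have Nlp: "\<forall>(l,e)\<in>set Nl. 0 \<le> l \<and> e \<in> Tr T A II" unfolding Nl_def using ps1 M
      by (auto simp: divide_nonpos_pos)
    obtain aP where aP: "aP \<in> Tr T A II" "\<forall>\<tau>\<in>Tr T II A. prb T (aP \<circ>\<^sub>T \<tau>) = sum_list (map (\<lambda>(l,e). l * prb T (e \<circ>\<^sub>T \<tau>)) Pl)"
      using eff_comb[OF Plp sPl] by blast
    obtain aN where aN: "aN \<in> Tr T A II" "\<forall>\<tau>\<in>Tr T II A. prb T (aN \<circ>\<^sub>T \<tau>) = sum_list (map (\<lambda>(l,e). l * prb T (e \<circ>\<^sub>T \<tau>)) Nl)"
      using eff_comb[OF Nlp sNl] by blast
    have diff: "prb T (aP \<circ>\<^sub>T \<tau>) - prb T (aN \<circ>\<^sub>T \<tau>) = evl ps (svec T A \<tau>) / M" if \<tau>: "\<tau> \<in> Tr T II A" for \<tau>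
      using aP(2) aN(2) \<tau> split_sum[of "\<lambda>x. prb T (x \<circ>\<^sub>T \<tau>)" M ps] evS[of \<tau>]
      unfolding Pl_def Nl_def by simp
    have eqC: "(aP \<otimes>\<^sub>T ID C) \<circ>\<^sub>T \<Psi> = (aN \<otimes>\<^sub>T ID C) \<circ>\<^sub>T \<Psi>"
    proof (rule state_eq)
      show "(aP \<otimes>\<^sub>T ID C) \<circ>\<^sub>T \<Psi> \<in> Tr T II C" "(aN \<otimes>\<^sub>T ID C) \<circ>\<^sub>T \<Psi> \<in> Tr T II C"
        using P aP(1) aN(1) by (auto intro!: TrR)
      show "\<forall>c\<in>Tr T C II. prb T (c \<circ>\<^sub>T ((aP \<otimes>\<^sub>T ID C) \<circ>\<^sub>T \<Psi>)) = prb T (c \<circ>\<^sub>T ((aN \<otimes>\<^sub>T ID C) \<circ>\<^sub>T \<Psi>))"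
      proof
        fix c assume c: "c \<in> Tr T C II"
        have Ic: "ID A \<otimes>\<^sub>T c \<in> Tr T (sc T A C) A" using parc_Tr[OF idt_Tr c, of A] by simp
        have tc: "(ID A \<otimes>\<^sub>T c) \<circ>\<^sub>T \<Psi> \<in> Tr T II A" using P Ic by auto
        have red: "prb T (c \<circ>\<^sub>T ((a \<otimes>\<^sub>T ID C) \<circ>\<^sub>T \<Psi>)) = prb T (a \<circ>\<^sub>T ((ID A \<otimes>\<^sub>T c) \<circ>\<^sub>T \<Psi>))"
          if a: "a \<in> Tr T A II" for a
        proof -
          have aI: "a \<otimes>\<^sub>T ID C \<in> Tr T (sc T A C) C" using parc_Tr[OF a idt_Tr, of C] by simp
          have "c \<circ>\<^sub>T ((a \<otimes>\<^sub>T ID C) \<circ>\<^sub>T \<Psi>) = (c \<circ>\<^sub>T (a \<otimes>\<^sub>T ID C)) \<circ>\<^sub>T \<Psi>" using assoc3[OF P aI c] .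
          also have "c \<circ>\<^sub>T (a \<otimes>\<^sub>T ID C) = a \<circ>\<^sub>T (ID A \<otimes>\<^sub>T c)" using eff_split_r[OF a c] eff_split_l[OF a c] by simp
          also have "(a \<circ>\<^sub>T (ID A \<otimes>\<^sub>T c)) \<circ>\<^sub>T \<Psi> = a \<circ>\<^sub>T ((ID A \<otimes>\<^sub>T c) \<circ>\<^sub>T \<Psi>)" using assoc3[OF P Ic a] by simp
          finally show ?thesis by simp
        qed
        have "(ID A \<otimes>\<^sub>T c) \<circ>\<^sub>T \<Psi> \<in> refset T II A \<omega>"
          using refine_effect[OF P c] unfolding refset_def \<omega>_def by simp
        then have "evl ps (svec T A ((ID A \<otimes>\<^sub>T c) \<circ>\<^sub>T \<Psi>)) = 0" by (rule evG)
        then have "prb T (aP \<circ>\<^sub>T ((ID A \<otimes>\<^sub>T c) \<circ>\<^sub>T \<Psi>)) = prb T (aN \<circ>\<^sub>T ((ID A \<otimes>\<^sub>T c) \<circ>\<^sub>T \<Psi>))"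
          using diff[OF tc] by simp
        then show "prb T (c \<circ>\<^sub>T ((aP \<otimes>\<^sub>T ID C) \<circ>\<^sub>T \<Psi>)) = prb T (c \<circ>\<^sub>T ((aN \<otimes>\<^sub>T ID C) \<circ>\<^sub>T \<Psi>))"
          using red[OF aP(1)] red[OF aN(1)] by simp
      qed
    qed
    have "aP = aN" using df aP(1) aN(1) eqC unfolding dyn_faithful_def by blast
    moreover have "prb T (aP \<circ>\<^sub>T \<rho>0) - prb T (aN \<circ>\<^sub>T \<rho>0) = 1 / M" using diff[OF \<rho>0T] ps3 by simp
    ultimately show False using M by simp
  qed
  have "rspan G \<subseteq> rspan (svec T A ` St T A)" unfolding rspan_span using fv.span_mono[OF GS] .
  moreover have "rspan (svec T A ` St T A) \<subseteq> rspan G"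
    unfolding rspan_span using fv.span_minimal[of "svec T A ` St T A" "fv.span G"] key by blast
  ultimately show ?thesis unfolding internal_def using \<omega>T by (simp add: St_def G_def \<omega>_def)
qed

end

theorem mainTheorem4:
  fixes T :: "('s, 't) opt_data"
  assumes "purif_opt T"
  shows "(\<forall>A C \<Psi>. \<Psi> \<in> St1 T (sc T A C) \<longrightarrow> pure_state T (sc T A C) \<Psi> \<longrightarrow>
            (dyn_faithful T A C \<Psi> \<longleftrightarrow> internal T A (marginal T A C \<Psi>)))
       \<and> (\<forall>A C \<omega> \<Psi>. internal T A \<omega> \<longrightarrow> \<omega> \<in> St1 T A \<longrightarrow>
            \<Psi> \<in> St1 T (sc T A C) \<longrightarrow> pure_state T (sc T A C) \<Psi> \<longrightarrow>
            marginal T A C \<Psi> = \<omega> \<longrightarrow> dyn_faithful T A C \<Psi>)"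
proof -
  interpret purif_opt T by (rule assms)
  show ?thesis
  proof (intro conjI allI impI)
    fix A C \<Psi> assume a: "\<Psi> \<in> St1 T (sc T A C)" "pure_state T (sc T A C) \<Psi>"
    show "dyn_faithful T A C \<Psi> \<longleftrightarrow> internal T A (marginal T A C \<Psi>)"
      using faithful_internal[OF St1_Tr[OF a(1)]] internal_faithful[OF a] by blast
  next
    fix A C \<omega> \<Psi> assume a: "internal T A \<omega>" "\<omega> \<in> St1 T A" "\<Psi> \<in> St1 T (sc T A C)"
      "pure_state T (sc T A C) \<Psi>" "marginal T A C \<Psi> = \<omega>"
    show "dyn_faithful T A C \<Psi>" using internal_faithful[OF a(3) a(4)] a(1) a(5) by simp
  qed
qed


end
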